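(* Let $p\in(0,1)$ be fixed, $q=1-p$. As $n\to\infty$, for every real $r>0$, $$f_r(n)=\frac{1}{(np)^r}\left(1+\frac{r(r+1)q}{2(np)}+\frac{r(r+1)(r+2)q(4+q+3rq)}{24(np)^2}+O\!\left(n^{-3}\right)\right).$$ In particular, $$f_1(n)=\frac{1}{np}\left(1+\frac{q}{np}+\frac{q(1+q)}{(np)^2}+\frac{q(1+4q+q^2)}{(np)^3}+\frac{q(1+q)(1+10q+q^2)}{(np)^4}+\frac{q(1+26q+66q^2+26q^3+q^4)}{(np)^5}+O(n^{-6})\right),$$ $$f_2(n)=\frac{1}{(np)^2}\left(1+\frac{3q}{np}+\frac{q(4+7q)}{(np)^2}+\frac{5q(1+6q+3q^2)}{(np)^3}+\frac{q(6+91q+146q^2+31q^3)}{(np)^4}+O(n^{-5})\right),$$ $$f_3(n)=\frac{1}{(np)^3}\left(1+\frac{6q}{np}+\frac{5q(2+5q)}{(np)^2}+\frac{15q(1+8q+6q^2)}{(np)^3}+\frac{7q(3+58q+128q^2+43q^3)}{(np)^4}+O(n^{-5})\right).$$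
   Context: For a positive integer $n$ and real $r>0$, $f_r(n)=\sum_{i=1}^n\binom{n}{i}p^iq^{n-i}\,i^{-r}$ (the $r$-th inverse moment of the positive binomial distribution times $1-q^n$). *)

theory Defs
  imports "HOL-Analysis.Analysis" "HOL-Library.Landau_Symbols"
begin

text \<open>The r-th inverse moment of the positive binomial distribution Bin(n,p),
  multiplied by 1 - q^n:  f_r(n) = sum_{i=1}^n (n choose i) p^i q^(n-i) i^(-r).\<close>
definition inv_moment :: "real \<Rightarrow> real \<Rightarrow> nat \<Rightarrow> real" where
  "inv_moment p r n =
     (\<Sum>i=1..n. real (n choose i) * p ^ i * (1 - p) ^ (n - i) * real i powr (- r))"

end

theory Submission
  imports Defs "HOL-Real_Asymp.Real_Asymp"
begin

definition bsum :: "real \<Rightarrow> nat \<Rightarrow> (nat \<Rightarrow> real) \<Rightarrow> real" where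
  "bsum p n h = (\<Sum>i\<le>n. real (n choose i) * p ^ i * (1 - p) ^ (n - i) * h i)"

lemma bsum_Suc:
  "bsum p (Suc n) h = (1 - p) * bsum p n h + p * bsum p n (\<lambda>i. h (Suc i))"
proof -
  let ?q = "1 - p"
  have A: "?q * bsum p n h = (\<Sum>j\<le>Suc n. real (n choose j) * p ^ j * ?q ^ (Suc n - j) * h j)"
    unfolding bsum_def sum_distrib_left
    by (simp add: Suc_diff_le mult_ac)
  also have "\<dots> = ?q ^ Suc n * h 0 + (\<Sum>i\<le>n. real (n choose Suc i) * p ^ Suc i * ?q ^ (n - i) * h (Suc i))"
    by (subst sum.atMost_Suc_shift) simp
  finally have A': "?q * bsum p n h = ?q ^ Suc n * h 0 + (\<Sum>i\<le>n. real (n choose Suc i) * p ^ Suc i * ?q ^ (n - i) * h (Suc i))" .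
  have B: "p * bsum p n (\<lambda>i. h (Suc i)) = (\<Sum>i\<le>n. real (n choose i) * p ^ Suc i * ?q ^ (n - i) * h (Suc i))"
    unfolding bsum_def sum_distrib_left by (simp add: mult_ac)
  have "bsum p (Suc n) h = ?q ^ Suc n * h 0 + (\<Sum>i\<le>n. real (Suc n choose Suc i) * p ^ Suc i * ?q ^ (n - i) * h (Suc i))"
    unfolding bsum_def by (subst sum.atMost_Suc_shift) simp
  also have "\<dots> = ?q ^ Suc n * h 0 + (\<Sum>i\<le>n. real (n choose Suc i) * p ^ Suc i * ?q ^ (n - i) * h (Suc i))
       + (\<Sum>i\<le>n. real (n choose i) * p ^ Suc i * ?q ^ (n - i) * h (Suc i))"
    by (simp add: sum.distrib[symmetric] algebra_simps)
  finally show ?thesis using A' B by simp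
qed

lemma bsum_sum: "bsum p n (\<lambda>i. \<Sum>j\<in>J. f j i) = (\<Sum>j\<in>J. bsum p n (f j))"
  unfolding bsum_def by (simp add: sum_distrib_left sum.swap[of _ J])

lemma bsum_cmult: "bsum p n (\<lambda>i. c * f i) = c * bsum p n f"
  unfolding bsum_def by (simp add: sum_distrib_left mult_ac)

definition cm :: "real \<Rightarrow> nat \<Rightarrow> nat \<Rightarrow> real" where
  "cm p k n = bsum p n (\<lambda>i. (real i - real n * p) ^ k)"

lemma cm_Suc:
  "cm p k (Suc n) = (\<Sum>j\<le>k. real (k choose j) * cm p j n * ((1 - p) * (- p) ^ (k - j) + p * (1 - p) ^ (k - j)))"
  (is "_ = ?rhs")
proof -
  have e1: "(real i - real (Suc n) * p) ^ k = (\<Sum>j\<le>k. real (k choose j) * (- p) ^ (k - j) * (real i - real n * p) ^ j)" for i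
    using binomial_ring[of "real i - real n * p" "- p" k] by (simp add: algebra_simps)
  have e2: "(real (Suc i) - real (Suc n) * p) ^ k = (\<Sum>j\<le>k. real (k choose j) * (1 - p) ^ (k - j) * (real i - real n * p) ^ j)" for i
    using binomial_ring[of "real i - real n * p" "1 - p" k] by (simp add: algebra_simps)
  have "cm p k (Suc n) = (1 - p) * bsum p n (\<lambda>i. (real i - real (Suc n) * p) ^ k)
      + p * bsum p n (\<lambda>i. (real (Suc i) - real (Suc n) * p) ^ k)"
    unfolding cm_def bsum_Suc[of p n] by simp
  also have "\<dots> = (1 - p) * bsum p n (\<lambda>i. \<Sum>j\<le>k. real (k choose j) * (- p) ^ (k - j) * (real i - real n * p) ^ j)
      + p * bsum p n (\<lambda>i. \<Sum>j\<le>k. real (k choose j) * (1 - p) ^ (k - j) * (real i - real n * p) ^ j)"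
    by (simp only: e2, simp only: e1)
  also have "\<dots> = ?rhs"
    unfolding bsum_sum bsum_cmult cm_def
    by (simp add: sum_distrib_left sum.distrib[symmetric] algebra_simps)
  finally show ?thesis .
qed

lemma cm_0: "cm p k 0 = (if k = 0 then 1 else 0)"
  unfolding cm_def bsum_def by simp

definition D :: "real \<Rightarrow> nat \<Rightarrow> real" where
  "D p m = (1 - p) * (- p) ^ m + p * (1 - p) ^ m"

lemma cm_Suc_D:
  "cm p k (Suc n) = (\<Sum>j\<le>k. real (k choose j) * cm p j n * D p (k - j))"
  unfolding cm_Suc D_def ..

definition P0 :: "real \<Rightarrow> real \<Rightarrow> real" where
  "P0 m q = (1)"

definition P1 :: "real \<Rightarrow> real \<Rightarrow> real" where
  "P1 m q = 0"

definition P2 :: "real \<Rightarrow> real \<Rightarrow> real" where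
  "P2 m q = (q * m)"

definition P3 :: "real \<Rightarrow> real \<Rightarrow> real" where
  "P3 m q = (- q * m + 2 * q^2 * m)"

definition P4 :: "real \<Rightarrow> real \<Rightarrow> real" where
  "P4 m q = (q * m - 6 * q^2 * m + 3 * q^2 * m^2 + 6 * q^3 * m)"

definition P5 :: "real \<Rightarrow> real \<Rightarrow> real" where
  "P5 m q = (- q * m + 14 * q^2 * m - 10 * q^2 * m^2 - 36 * q^3 * m + 20 * q^3 * m^2 + 24 * q^4 * m)"

definition P6 :: "real \<Rightarrow> real \<Rightarrow> real" where
  "P6 m q = (q * m - 30 * q^2 * m + 25 * q^2 * m^2 + 150 * q^3 * m - 130 * q^3 * m^2 + 15 * q^3 * m^3 - 240 * q^4 * m + 130 * q^4 * m^2 + 120 * q^5 * m)"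

definition P7 :: "real \<Rightarrow> real \<Rightarrow> real" where
  "P7 m q = (- q * m + 62 * q^2 * m - 56 * q^2 * m^2 - 540 * q^3 * m + 574 * q^3 * m^2 - 105 * q^3 * m^3 + 1560 * q^4 * m - 1386 * q^4 * m^2 + 210 * q^4 * m^3 - 1800 * q^5 * m + 924 * q^5 * m^2 + 720 * q^6 * m)"

definition P8 :: "real \<Rightarrow> real \<Rightarrow> real" where
  "P8 m q = (q * m - 126 * q^2 * m + 119 * q^2 * m^2 + 1806 * q^3 * m - 2156 * q^3 * m^2 + 490 * q^3 * m^3 - 8400 * q^4 * m + 9464 * q^4 * m^2 - 2380 * q^4 * m^3 + 105 * q^4 * m^4 + 16800 * q^5 * m - 14616 * q^5 * m^2 + 2380 * q^5 * m^3 - 15120 * q^6 * m + 7308 * q^6 * m^2 + 5040 * q^7 * m)"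

definition P9 :: "real \<Rightarrow> real \<Rightarrow> real" where
  "P9 m q = (- q * m + 254 * q^2 * m - 246 * q^2 * m^2 - 5796 * q^3 * m + 7440 * q^3 * m^2 - 1918 * q^3 * m^3 + 40824 * q^4 * m - 52956 * q^4 * m^2 + 17052 * q^4 * m^3 - 1260 * q^4 * m^4 - 126000 * q^5 * m + 142344 * q^5 * m^2 - 39648 * q^5 * m^3 + 2520 * q^5 * m^4 + 191520 * q^6 * m - 160560 * q^6 * m^2 + 26432 * q^6 * m^3 - 141120 * q^7 * m + 64224 * q^7 * m^2 + 40320 * q^8 * m)"

definition P10 :: "real \<Rightarrow> real \<Rightarrow> real" where
  "P10 m q = (q * m - 510 * q^2 * m + 501 * q^2 * m^2 + 18150 * q^3 * m - 24438 * q^3 * m^2 + 6825 * q^3 * m^3 - 186480 * q^4 * m + 265278 * q^4 * m^2 - 99120 * q^4 * m^3 + 9450 * q^4 * m^4 + 834120 * q^5 * m - 1105056 * q^5 * m^2 + 402780 * q^5 * m^3 - 44100 * q^5 * m^4 + 945 * q^5 * m^5 - 1905120 * q^6 * m + 2110968 * q^6 * m^2 - 607320 * q^6 * m^3 + 44100 * q^6 * m^4 + 2328480 * q^7 * m - 1870128 * q^7 * m^2 + 303660 * q^7 * m^3 - 1451520 * q^8 * m + 623376 * q^8 * m^2 + 362880 * q^9 * m)"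

definition P11 :: "real \<Rightarrow> real \<Rightarrow> real" where
  "P11 m q = (- q * m + 1022 * q^2 * m - 1012 * q^2 * m^2 - 55980 * q^3 * m + 77858 * q^3 * m^2 - 22935 * q^3 * m^3 + 818520 * q^4 * m - 1241262 * q^4 * m^2 + 511830 * q^4 * m^3 - 56980 * q^4 * m^4 - 5103000 * q^5 * m + 7525188 * q^5 * m^2 - 3237300 * q^5 * m^3 + 466620 * q^5 * m^4 - 17325 * q^5 * m^5 + 16435440 * q^6 * m - 21661200 * q^6 * m^2 + 8289600 * q^6 * m^3 - 1057980 * q^6 * m^4 + 34650 * q^6 * m^5 - 29635200 * q^7 * m + 31893840 * q^7 * m^2 - 9197100 * q^7 * m^3 + 705320 * q^7 * m^4 + 30240000 * q^8 * m - 23229360 * q^8 * m^2 + 3678840 * q^8 * m^3 - 16329600 * q^9 * m + 6636960 * q^9 * m^2 + 3628800 * q^10 * m)"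

definition P12 :: "real \<Rightarrow> real \<Rightarrow> real" where
  "P12 m q = (q * m - 2046 * q^2 * m + 2035 * q^2 * m^2 + 171006 * q^3 * m - 243232 * q^3 * m^2 + 74316 * q^3 * m^3 - 3498000 * q^4 * m + 5553988 * q^4 * m^2 - 2453748 * q^4 * m^3 + 302995 * q^4 * m^4 + 29607600 * q^5 * m - 47124792 * q^5 * m^2 + 22687368 * q^5 * m^3 - 3879260 * q^5 * m^4 + 190575 * q^5 * m^5 - 129230640 * q^6 * m + 191818836 * q^6 * m^2 - 87791616 * q^6 * m^3 + 14978040 * q^6 * m^4 - 866250 * q^6 * m^5 + 10395 * q^6 * m^6 + 322494480 * q^7 * m - 417502800 * q^7 * m^2 + 162206748 * q^7 * m^3 - 22197560 * q^7 * m^4 + 866250 * q^7 * m^5 - 479001600 * q^8 * m + 498492720 * q^8 * m^2 - 141973128 * q^8 * m^3 + 11098780 * q^8 * m^4 + 419126400 * q^9 * m - 307992960 * q^9 * m^2 + 47324376 * q^9 * m^3 - 199584000 * q^10 * m + 76998240 * q^10 * m^2 + 39916800 * q^11 * m)"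

lemma cm_rec1: "cm p 1 (Suc n) = 1 * cm p 0 n * D p 1 + 1 * cm p 1 n * D p 0"
  unfolding cm_Suc_D by (simp add: eval_nat_numeral binomial_Suc_Suc)

lemma cm_rec2: "cm p 2 (Suc n) = 1 * cm p 0 n * D p 2 + 2 * cm p 1 n * D p 1 + 1 * cm p 2 n * D p 0"
  unfolding cm_Suc_D by (simp add: eval_nat_numeral binomial_Suc_Suc)

lemma cm_rec3: "cm p 3 (Suc n) = 1 * cm p 0 n * D p 3 + 3 * cm p 1 n * D p 2 + 3 * cm p 2 n * D p 1 + 1 * cm p 3 n * D p 0"
  unfolding cm_Suc_D by (simp add: eval_nat_numeral binomial_Suc_Suc)

lemma cm_rec4: "cm p 4 (Suc n) = 1 * cm p 0 n * D p 4 + 4 * cm p 1 n * D p 3 + 6 * cm p 2 n * D p 2 + 4 * cm p 3 n * D p 1 + 1 * cm p 4 n * D p 0"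
  unfolding cm_Suc_D by (simp add: eval_nat_numeral binomial_Suc_Suc)

lemma cm_rec5: "cm p 5 (Suc n) = 1 * cm p 0 n * D p 5 + 5 * cm p 1 n * D p 4 + 10 * cm p 2 n * D p 3 + 10 * cm p 3 n * D p 2 + 5 * cm p 4 n * D p 1 + 1 * cm p 5 n * D p 0"
  unfolding cm_Suc_D by (simp add: eval_nat_numeral binomial_Suc_Suc)

lemma cm_rec6: "cm p 6 (Suc n) = 1 * cm p 0 n * D p 6 + 6 * cm p 1 n * D p 5 + 15 * cm p 2 n * D p 4 + 20 * cm p 3 n * D p 3 + 15 * cm p 4 n * D p 2 + 6 * cm p 5 n * D p 1 + 1 * cm p 6 n * D p 0"
  unfolding cm_Suc_D by (simp add: eval_nat_numeral binomial_Suc_Suc)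

lemma cm_rec7: "cm p 7 (Suc n) = 1 * cm p 0 n * D p 7 + 7 * cm p 1 n * D p 6 + 21 * cm p 2 n * D p 5 + 35 * cm p 3 n * D p 4 + 35 * cm p 4 n * D p 3 + 21 * cm p 5 n * D p 2 + 7 * cm p 6 n * D p 1 + 1 * cm p 7 n * D p 0"
  unfolding cm_Suc_D by (simp add: eval_nat_numeral binomial_Suc_Suc)

lemma cm_rec8: "cm p 8 (Suc n) = 1 * cm p 0 n * D p 8 + 8 * cm p 1 n * D p 7 + 28 * cm p 2 n * D p 6 + 56 * cm p 3 n * D p 5 + 70 * cm p 4 n * D p 4 + 56 * cm p 5 n * D p 3 + 28 * cm p 6 n * D p 2 + 8 * cm p 7 n * D p 1 + 1 * cm p 8 n * D p 0"
  unfolding cm_Suc_D by (simp add: eval_nat_numeral binomial_Suc_Suc)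

lemma cm_rec9: "cm p 9 (Suc n) = 1 * cm p 0 n * D p 9 + 9 * cm p 1 n * D p 8 + 36 * cm p 2 n * D p 7 + 84 * cm p 3 n * D p 6 + 126 * cm p 4 n * D p 5 + 126 * cm p 5 n * D p 4 + 84 * cm p 6 n * D p 3 + 36 * cm p 7 n * D p 2 + 9 * cm p 8 n * D p 1 + 1 * cm p 9 n * D p 0"
  unfolding cm_Suc_D by (simp add: eval_nat_numeral binomial_Suc_Suc)

lemma cm_rec10: "cm p 10 (Suc n) = 1 * cm p 0 n * D p 10 + 10 * cm p 1 n * D p 9 + 45 * cm p 2 n * D p 8 + 120 * cm p 3 n * D p 7 + 210 * cm p 4 n * D p 6 + 252 * cm p 5 n * D p 5 + 210 * cm p 6 n * D p 4 + 120 * cm p 7 n * D p 3 + 45 * cm p 8 n * D p 2 + 10 * cm p 9 n * D p 1 + 1 * cm p 10 n * D p 0"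
  unfolding cm_Suc_D by (simp add: eval_nat_numeral binomial_Suc_Suc)

lemma cm_rec11: "cm p 11 (Suc n) = 1 * cm p 0 n * D p 11 + 11 * cm p 1 n * D p 10 + 55 * cm p 2 n * D p 9 + 165 * cm p 3 n * D p 8 + 330 * cm p 4 n * D p 7 + 462 * cm p 5 n * D p 6 + 462 * cm p 6 n * D p 5 + 330 * cm p 7 n * D p 4 + 165 * cm p 8 n * D p 3 + 55 * cm p 9 n * D p 2 + 11 * cm p 10 n * D p 1 + 1 * cm p 11 n * D p 0"
  unfolding cm_Suc_D by (simp add: eval_nat_numeral binomial_Suc_Suc)

lemma cm_rec12: "cm p 12 (Suc n) = 1 * cm p 0 n * D p 12 + 12 * cm p 1 n * D p 11 + 66 * cm p 2 n * D p 10 + 220 * cm p 3 n * D p 9 + 495 * cm p 4 n * D p 8 + 792 * cm p 5 n * D p 7 + 924 * cm p 6 n * D p 6 + 792 * cm p 7 n * D p 5 + 495 * cm p 8 n * D p 4 + 220 * cm p 9 n * D p 3 + 66 * cm p 10 n * D p 2 + 12 * cm p 11 n * D p 1 + 1 * cm p 12 n * D p 0"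
  unfolding cm_Suc_D by (simp add: eval_nat_numeral binomial_Suc_Suc)

lemma cm0: "cm p 0 n = P0 (real n * p) (1 - p)"
  unfolding cm_def bsum_def P0_def using binomial_ring[of p "1 - p" n] by (simp add: mult_ac)

lemma cm1: "cm p 1 n = P1 (real n * p) (1 - p)"
proof (induction n)
  case 0 show ?case by (simp add: cm_0 P1_def)
next
  case (Suc n)
  show ?case unfolding cm_rec1 Suc cm0
    unfolding D_def P0_def P1_def of_nat_Suc by algebra
qed

lemma cm2: "cm p 2 n = P2 (real n * p) (1 - p)"
proof (induction n)
  case 0 show ?case by (simp add: cm_0 P2_def)
next
  case (Suc n)
  show ?case unfolding cm_rec2 Suc cm0 cm1
    unfolding D_def P0_def P1_def P2_def of_nat_Suc by algebra
qed

lemma cm3: "cm p 3 n = P3 (real n * p) (1 - p)"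
proof (induction n)
  case 0 show ?case by (simp add: cm_0 P3_def)
next
  case (Suc n)
  show ?case unfolding cm_rec3 Suc cm0 cm1 cm2
    unfolding D_def P0_def P1_def P2_def P3_def of_nat_Suc by algebra
qed

lemma cm4: "cm p 4 n = P4 (real n * p) (1 - p)"
proof (induction n)
  case 0 show ?case by (simp add: cm_0 P4_def)
next
  case (Suc n)
  show ?case unfolding cm_rec4 Suc cm0 cm1 cm2 cm3
    unfolding D_def P0_def P1_def P2_def P3_def P4_def of_nat_Suc by algebra
qed

lemma cm5: "cm p 5 n = P5 (real n * p) (1 - p)"
proof (induction n)
  case 0 show ?case by (simp add: cm_0 P5_def)
next
  case (Suc n)
  show ?case unfolding cm_rec5 Suc cm0 cm1 cm2 cm3 cm4
    unfolding D_def P0_def P1_def P2_def P3_def P4_def P5_def of_nat_Suc by algebra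
qed

lemma cm6: "cm p 6 n = P6 (real n * p) (1 - p)"
proof (induction n)
  case 0 show ?case by (simp add: cm_0 P6_def)
next
  case (Suc n)
  show ?case unfolding cm_rec6 Suc cm0 cm1 cm2 cm3 cm4 cm5
    unfolding D_def P0_def P1_def P2_def P3_def P4_def P5_def P6_def of_nat_Suc by algebra
qed

lemma cm7: "cm p 7 n = P7 (real n * p) (1 - p)"
proof (induction n)
  case 0 show ?case by (simp add: cm_0 P7_def)
next
  case (Suc n)
  show ?case unfolding cm_rec7 Suc cm0 cm1 cm2 cm3 cm4 cm5 cm6
    unfolding D_def P0_def P1_def P2_def P3_def P4_def P5_def P6_def P7_def of_nat_Suc by algebra
qed

lemma cm8: "cm p 8 n = P8 (real n * p) (1 - p)"
proof (induction n)
  case 0 show ?case by (simp add: cm_0 P8_def)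
next
  case (Suc n)
  show ?case unfolding cm_rec8 Suc cm0 cm1 cm2 cm3 cm4 cm5 cm6 cm7
    unfolding D_def P0_def P1_def P2_def P3_def P4_def P5_def P6_def P7_def P8_def of_nat_Suc by algebra
qed

lemma cm9: "cm p 9 n = P9 (real n * p) (1 - p)"
proof (induction n)
  case 0 show ?case by (simp add: cm_0 P9_def)
next
  case (Suc n)
  show ?case unfolding cm_rec9 Suc cm0 cm1 cm2 cm3 cm4 cm5 cm6 cm7 cm8
    unfolding D_def P0_def P1_def P2_def P3_def P4_def P5_def P6_def P7_def P8_def P9_def of_nat_Suc by algebra
qed

lemma cm10: "cm p 10 n = P10 (real n * p) (1 - p)"
proof (induction n)
  case 0 show ?case by (simp add: cm_0 P10_def)
next
  case (Suc n)
  show ?case unfolding cm_rec10 Suc cm0 cm1 cm2 cm3 cm4 cm5 cm6 cm7 cm8 cm9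
    unfolding D_def P0_def P1_def P2_def P3_def P4_def P5_def P6_def P7_def P8_def P9_def P10_def of_nat_Suc by algebra
qed

lemma cm11: "cm p 11 n = P11 (real n * p) (1 - p)"
proof (induction n)
  case 0 show ?case by (simp add: cm_0 P11_def)
next
  case (Suc n)
  show ?case unfolding cm_rec11 Suc cm0 cm1 cm2 cm3 cm4 cm5 cm6 cm7 cm8 cm9 cm10
    unfolding D_def P0_def P1_def P2_def P3_def P4_def P5_def P6_def P7_def P8_def P9_def P10_def P11_def of_nat_Suc by algebra
qed

lemma cm12: "cm p 12 n = P12 (real n * p) (1 - p)"
proof (induction n)
  case 0 show ?case by (simp add: cm_0 P12_def)
next
  case (Suc n)
  show ?case unfolding cm_rec12 Suc cm0 cm1 cm2 cm3 cm4 cm5 cm6 cm7 cm8 cm9 cm10 cm11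
    unfolding D_def P0_def P1_def P2_def P3_def P4_def P5_def P6_def P7_def P8_def P9_def P10_def P11_def P12_def of_nat_Suc by algebra
qed

definition cc :: "real \<Rightarrow> nat \<Rightarrow> real" where
  "cc r k = (\<Prod>j<k. (- r - real j)) / fact k"

definition Tp :: "real \<Rightarrow> nat \<Rightarrow> real \<Rightarrow> real" where
  "Tp r N u = (\<Sum>k<N. cc r k * u ^ k)"

lemma taylor_deriv:
  assumes "1 + x > 0"
  shows "DERIV (\<lambda>x. (\<Prod>j<m. (- r - real j)) * (1 + x) powr (- r - real m)) x :>
          (\<Prod>j<Suc m. (- r - real j)) * (1 + x) powr (- r - real (Suc m))"
proof -
  have "DERIV (\<lambda>x. (1 + x) powr (- r - real m)) x :> (- r - real m) * (1 + x) powr (- r - real m - of_nat 1) * 1"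
    by (rule DERIV_fun_powr) (auto intro!: derivative_eq_intros simp: assms)
  then have "DERIV (\<lambda>x. (\<Prod>j<m. (- r - real j)) * (1 + x) powr (- r - real m)) x :>
      (\<Prod>j<m. (- r - real j)) * ((- r - real m) * (1 + x) powr (- r - real m - of_nat 1) * 1)"
    by (rule DERIV_cmult)
  then show ?thesis by (simp add: algebra_simps)
qed

lemma taylor_bound:
  assumes "u \<ge> -1/2" "N > 0" "r \<ge> 0"
  shows "\<bar>(1 + u) powr (- r) - Tp r N u\<bar> \<le> \<bar>cc r N\<bar> * 2 powr (r + real N) * \<bar>u\<bar> ^ N"
proof -
  define diff where "diff = (\<lambda>m x. (\<Prod>j<m. (- r - real j)) * (1 + x) powr (- r - real m))"
  have d0: "diff 0 = (\<lambda>x. (1 + x) powr (- r))" unfolding diff_def by simp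
  have dd: "DERIV (diff m) t :> diff (Suc m) t" if "t \<ge> -1/2" for m t
    unfolding diff_def by (rule taylor_deriv) (use that in simp)
  have c0: "diff m 0 / fact m = cc r m" for m unfolding diff_def cc_def by simp
  have rem: "\<bar>diff N t / fact N\<bar> \<le> \<bar>cc r N\<bar> * 2 powr (r + real N)" if "t \<ge> -1/2" for t
  proof -
    have "(1 + t) powr (- r - real N) \<le> (1/2) powr (- r - real N)"
      by (rule powr_mono2') (use that assms in auto)
    also have "\<dots> = 2 powr (r + real N)"
    proof -
      have "(1/2::real) powr (- r - real N) = 1 / 2 powr (- r - real N)"
        by (simp add: powr_divide)
      also have "\<dots> = 2 powr (r + real N)"
        using powr_minus_divide[of 2 "r + real N"] by (simp add: field_simps)
      finally show ?thesis .
    qed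
    finally have b: "(1 + t) powr (- r - real N) \<le> 2 powr (r + real N)" .
    have "\<bar>diff N t / fact N\<bar> = \<bar>cc r N\<bar> * (1 + t) powr (- r - real N)"
      unfolding diff_def cc_def by (simp add: abs_mult)
    also have "\<dots> \<le> \<bar>cc r N\<bar> * 2 powr (r + real N)"
      by (rule mult_left_mono[OF b]) simp
    finally show ?thesis .
  qed
  consider "u = 0" | "u > 0" | "u < 0" by linarith
  then show ?thesis
  proof cases
    case 1
    have "Tp r N 0 = 1" unfolding Tp_def using assms(2)
      by (subst sum.remove[of _ 0]) (auto simp: cc_def)
    then show ?thesis using 1 by simp
  next
    case 2
    obtain t where t: "0 < t" "t \<le> u" and eq: "(1 + u) powr (- r) = (\<Sum>m<N. diff m 0 / fact m * u ^ m) + diff N t / fact N * u ^ N"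
    proof -
      have "\<forall>m t. m < N \<and> 0 \<le> t \<and> t \<le> u \<longrightarrow> DERIV (diff m) t :> diff (Suc m) t"
        using dd by simp
      from Maclaurin2[OF 2 d0 this] show ?thesis using that by blast
    qed
    have "\<bar>(1 + u) powr (- r) - Tp r N u\<bar> = \<bar>diff N t / fact N\<bar> * \<bar>u\<bar> ^ N"
      unfolding eq Tp_def c0 by (simp add: abs_mult power_abs)
    also have "\<dots> \<le> \<bar>cc r N\<bar> * 2 powr (r + real N) * \<bar>u\<bar> ^ N"
      by (rule mult_right_mono[OF rem]) (use t in auto)
    finally show ?thesis .
  next
    case 3
    obtain t where t: "u < t" "t < 0" and eq: "(1 + u) powr (- r) = (\<Sum>m<N. diff m 0 / fact m * u ^ m) + diff N t / fact N * u ^ N"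
    proof -
      have "\<forall>m t. m < N \<and> u \<le> t \<and> t \<le> 0 \<longrightarrow> DERIV (diff m) t :> diff (Suc m) t"
        using dd assms(1) by simp
      from Maclaurin_minus[OF 3 assms(2) d0 this] show ?thesis using that by blast
    qed
    have "\<bar>(1 + u) powr (- r) - Tp r N u\<bar> = \<bar>diff N t / fact N\<bar> * \<bar>u\<bar> ^ N"
      unfolding eq Tp_def c0 by (simp add: abs_mult power_abs)
    also have "\<dots> \<le> \<bar>cc r N\<bar> * 2 powr (r + real N) * \<bar>u\<bar> ^ N"
      by (rule mult_right_mono[OF rem]) (use t assms in auto)
    finally show ?thesis .
  qed
qed

lemma bsum_add: "bsum p n (\<lambda>i. f i + g i) = bsum p n f + bsum p n g"
  unfolding bsum_def by (simp add: sum.distrib algebra_simps)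

lemma bsum_mono:
  assumes "0 \<le> p" "p \<le> 1" "\<And>i. i \<le> n \<Longrightarrow> f i \<le> g i"
  shows "bsum p n f \<le> bsum p n g"
  unfolding bsum_def
  by (rule sum_mono, rule mult_left_mono) (use assms in auto)

lemma bsum_split:
  "bsum p n g = (1 - p) ^ n * g 0 + (\<Sum>i=1..n. real (n choose i) * p ^ i * (1 - p) ^ (n - i) * g i)"
proof -
  have "{..n} = insert 0 {1..n}" by auto
  then show ?thesis unfolding bsum_def by simp
qed

definition rho :: "real \<Rightarrow> real" where
  "rho p = 2 powr (p / 2) * (1 - p / 2)"

lemma rho_bounds:
  assumes "0 < p" "p < 1"
  shows "0 < rho p" "rho p < 1"
proof -
  show "0 < rho p" unfolding rho_def using assms by simp
  have "2 powr (p/2) = exp (p/2 * ln 2)" by (simp add: powr_def)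
  also have "\<dots> < exp (p/2)"
    using assms ln_2_less_1 by simp
  finally have a: "2 powr (p/2) < exp (p/2)" .
  have b: "1 - p/2 \<le> exp (- (p/2))" using exp_ge_add_one_self[of "- (p/2)"] by simp
  have "rho p < exp (p/2) * (1 - p/2)"
    unfolding rho_def by (rule mult_strict_right_mono[OF a]) (use assms in simp)
  also have "\<dots> \<le> exp (p/2) * exp (- (p/2))"
    by (rule mult_left_mono[OF b]) simp
  also have "\<dots> = 1" by (simp add: exp_minus)
  finally show "rho p < 1" .
qed

lemma chernoff:
  assumes "0 < p" "p < 1"
  shows "bsum p n (\<lambda>i. if real i < real n * p / 2 then 1 else 0) \<le> rho p ^ n"
proof -
  have "bsum p n (\<lambda>i. if real i < real n * p / 2 then 1 else 0)
        \<le> bsum p n (\<lambda>i. 2 powr (real n * p / 2) * (1/2) ^ i)"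
  proof (rule bsum_mono)
    fix i assume "i \<le> n"
    show "(if real i < real n * p / 2 then 1 else 0) \<le> 2 powr (real n * p / 2) * (1 / 2) ^ i"
    proof (cases "real i < real n * p / 2")
      case True
      have "1 \<le> 2 powr (real n * p / 2 - real i)"
        by (rule ge_one_powr_ge_zero) (use True in auto)
      also have "\<dots> = 2 powr (real n * p / 2) * (1/2) ^ i"
        unfolding powr_diff by (simp add: powr_realpow power_one_over)
      finally show ?thesis using True by simp
    qed simp
  qed (use assms in auto)
  also have "\<dots> = 2 powr (real n * p / 2) * (\<Sum>i\<le>n. real (n choose i) * (p/2) ^ i * (1 - p) ^ (n - i))"
    unfolding bsum_cmult[of p n "2 powr (real n * p / 2)" "\<lambda>i. (1/2)^i"] bsum_def
    by (simp add: power_divide sum_distrib_left mult_ac)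
  also have "\<dots> = 2 powr (real n * p / 2) * (1 - p / 2) ^ n"
    using binomial_ring[of "p/2" "1 - p" n] by (simp add: mult_ac)
  also have "2 powr (real n * p / 2) = (2 powr (p/2)) ^ n"
  proof -
    have "(2 powr (p/2)) ^ n = (2 powr (p/2)) powr (real n)"
      by (rule powr_realpow[symmetric]) simp
    also have "\<dots> = 2 powr (real n * p / 2)" unfolding powr_powr by (simp add: mult_ac)
    finally show ?thesis by simp
  qed
  finally show ?thesis unfolding rho_def by (simp add: power_mult_distrib)
qed

lemma sum_T_bsum:
  assumes "m = real n * p"
  shows "(\<Sum>k<N. cc r k * cm p k n / m ^ k) = bsum p n (\<lambda>i. Tp r N ((real i - m) / m))"
proof -
  have "cc r k * cm p k n / m ^ k = bsum p n (\<lambda>i. cc r k * ((real i - m) / m) ^ k)" for k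
  proof -
    have "bsum p n (\<lambda>i. cc r k * ((real i - m) / m) ^ k) = bsum p n (\<lambda>i. (cc r k / m ^ k) * (real i - m) ^ k)"
      by (simp add: power_divide)
    also have "\<dots> = cc r k / m ^ k * bsum p n (\<lambda>i. (real i - m) ^ k)" by (rule bsum_cmult)
    finally show ?thesis unfolding cm_def assms by simp
  qed
  then show ?thesis unfolding Tp_def bsum_sum by simp
qed

lemma e_bound:
  assumes "r > 0" "N > 0" "even N" "m \<ge> 1" "i \<ge> 1"
  shows "\<bar>real i powr (- r) - m powr (- r) * Tp r N ((real i - m) / m)\<bar>
     \<le> m powr (- r) * (\<bar>cc r N\<bar> * 2 powr (r + real N)) * ((real i - m) / m) ^ N
       + (if real i < m / 2 then 1 + (\<Sum>k<N. \<bar>cc r k\<bar>) else 0)"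
proof -
  define u where "u = (real i - m) / m"
  have m0: "m > 0" using assms by simp
  have iu: "real i = m * (1 + u)" unfolding u_def using m0 by (simp add: field_simps)
  have uN: "u ^ N \<ge> 0" using assms(3) by (simp add: zero_le_even_power)
  have A: "0 \<le> m powr (- r) * (\<bar>cc r N\<bar> * 2 powr (r + real N)) * u ^ N"
    using uN by simp
  show ?thesis
  proof (cases "real i < m / 2")
    case False
    then have u2: "u \<ge> -1/2" unfolding u_def using m0 by (simp add: field_simps)
    have "real i powr (- r) = m powr (- r) * (1 + u) powr (- r)"
      unfolding iu by (rule powr_mult)
    then have "\<bar>real i powr (- r) - m powr (- r) * Tp r N u\<bar> = m powr (- r) * \<bar>(1 + u) powr (- r) - Tp r N u\<bar>"
      by (simp add: right_diff_distrib[symmetric] abs_mult)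
    also have "\<dots> \<le> m powr (- r) * (\<bar>cc r N\<bar> * 2 powr (r + real N) * \<bar>u\<bar> ^ N)"
      by (rule mult_left_mono[OF taylor_bound]) (use u2 assms in auto)
    also have "\<bar>u\<bar> ^ N = u ^ N" using assms(3) by (simp add: power_even_abs)
    finally show ?thesis using False unfolding u_def[symmetric] by (simp add: mult_ac)
  next
    case True
    have ua: "\<bar>u\<bar> \<le> 1" unfolding u_def using m0 True assms(5) by (simp add: field_simps abs_le_iff)
    have i1: "real i powr (- r) \<le> 1"
    proof -
      have "1 \<le> real i powr r" by (rule ge_one_powr_ge_zero) (use assms in auto)
      then show ?thesis by (auto simp add: powr_minus_divide divide_le_eq_1)
    qed
    have m1: "m powr (- r) \<le> 1"
    proof -
      have "1 \<le> m powr r" by (rule ge_one_powr_ge_zero) (use assms in auto)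
      then show ?thesis by (auto simp add: powr_minus_divide divide_le_eq_1)
    qed
    have T: "\<bar>Tp r N u\<bar> \<le> (\<Sum>k<N. \<bar>cc r k\<bar>)"
    proof -
      have "\<bar>Tp r N u\<bar> \<le> (\<Sum>k<N. \<bar>cc r k * u ^ k\<bar>)" unfolding Tp_def by (rule sum_abs)
      also have "\<dots> \<le> (\<Sum>k<N. \<bar>cc r k\<bar>)"
      proof (rule sum_mono)
        fix k
        have "\<bar>u\<bar> ^ k \<le> 1" using ua by (simp add: power_le_one)
        then show "\<bar>cc r k * u ^ k\<bar> \<le> \<bar>cc r k\<bar>"
          by (simp add: abs_mult power_abs mult_left_le)
      qed
      finally show ?thesis .
    qed
    have "\<bar>real i powr (- r) - m powr (- r) * Tp r N u\<bar> \<le> \<bar>real i powr (- r)\<bar> + m powr (- r) * \<bar>Tp r N u\<bar>"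
      using abs_triangle_ineq4[of "real i powr (- r)" "m powr (- r) * Tp r N u"] by (simp add: abs_mult)
    also have "\<dots> \<le> 1 + 1 * (\<Sum>k<N. \<bar>cc r k\<bar>)"
      using i1 m1 T by (intro add_mono mult_mono) auto
    finally show ?thesis using True A unfolding u_def[symmetric] by simp
  qed
qed

lemma bsum_uN:
  assumes "m = real n * p"
  shows "bsum p n (\<lambda>i. ((real i - m) / m) ^ N) = cm p N n / m ^ N"
proof -
  have "bsum p n (\<lambda>i. ((real i - m) / m) ^ N) = bsum p n (\<lambda>i. (1 / m ^ N) * (real i - m) ^ N)"
    by (simp add: power_divide)
  also have "\<dots> = 1 / m ^ N * bsum p n (\<lambda>i. (real i - m) ^ N)" by (rule bsum_cmult)
  finally show ?thesis unfolding cm_def assms by simp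
qed

lemma main_bound:
  assumes "0 < p" "p < 1" "r > 0" "N > 0" "even N" "m = real n * p" "m \<ge> 1"
  shows "\<bar>inv_moment p r n - m powr (- r) * (\<Sum>k<N. cc r k * cm p k n / m ^ k)\<bar>
    \<le> m powr (- r) * (\<bar>cc r N\<bar> * 2 powr (r + real N)) * (cm p N n / m ^ N)
      + (1 + (\<Sum>k<N. \<bar>cc r k\<bar>)) * rho p ^ n
      + m powr (- r) * (1 - p) ^ n * \<bar>Tp r N (-1)\<bar>"
proof -
  define b where "b i = real (n choose i) * p ^ i * (1 - p) ^ (n - i)" for i
  define u where "u i = (real i - m) / m" for i
  define Dc where "Dc = 1 + (\<Sum>k<N. \<bar>cc r k\<bar>)"
  define Bm where "Bm = m powr (- r) * (\<bar>cc r N\<bar> * 2 powr (r + real N))"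
  define F where "F i = Bm * u i ^ N + (if real i < m / 2 then Dc else 0)" for i
  define e where "e i = real i powr (- r) - m powr (- r) * Tp r N (u i)" for i
  have m0: "m > 0" using assms by simp
  have b0: "b i \<ge> 0" for i unfolding b_def using assms by simp
  have u0: "u 0 = -1" unfolding u_def using m0 by simp
  have Dc0: "Dc \<ge> 0" unfolding Dc_def by (simp add: sum_nonneg add_nonneg_nonneg)
  have F0: "F i \<ge> 0" for i
    unfolding F_def Bm_def using Dc0 assms(5) by (auto simp: zero_le_even_power intro!: add_nonneg_nonneg)
  have S: "(\<Sum>k<N. cc r k * cm p k n / m ^ k) = (1 - p) ^ n * Tp r N (-1) + (\<Sum>i=1..n. b i * Tp r N (u i))"
    unfolding sum_T_bsum[OF assms(6)] bsum_split u_def[symmetric] u0 b_def ..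
  have I: "inv_moment p r n = (\<Sum>i=1..n. b i * real i powr (- r))"
    unfolding inv_moment_def b_def ..
  have diff: "inv_moment p r n - m powr (- r) * (\<Sum>k<N. cc r k * cm p k n / m ^ k)
      = (\<Sum>i=1..n. b i * e i) - m powr (- r) * (1 - p) ^ n * Tp r N (-1)"
    unfolding S I e_def by (simp add: algebra_simps sum_distrib_left sum_subtractf)
  have "\<bar>\<Sum>i=1..n. b i * e i\<bar> \<le> (\<Sum>i=1..n. b i * F i)"
  proof -
    have "\<bar>\<Sum>i=1..n. b i * e i\<bar> \<le> (\<Sum>i=1..n. \<bar>b i * e i\<bar>)" by (rule sum_abs)
    also have "\<dots> \<le> (\<Sum>i=1..n. b i * F i)"
    proof (rule sum_mono)
      fix i assume "i \<in> {1..n}"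
      then have "\<bar>e i\<bar> \<le> F i" unfolding e_def F_def Bm_def Dc_def u_def
        using e_bound[of r N m i] assms by (simp add: mult_ac)
      then show "\<bar>b i * e i\<bar> \<le> b i * F i" using b0[of i] by (simp add: abs_mult mult_left_mono)
    qed
    finally show ?thesis .
  qed
  also have "\<dots> \<le> bsum p n F"
    unfolding bsum_split b_def[symmetric] using F0[of 0] assms by simp
  also have "bsum p n F = Bm * (cm p N n / m ^ N) + Dc * bsum p n (\<lambda>i. if real i < m / 2 then 1 else 0)"
  proof -
    have Feq: "F = (\<lambda>i. Bm * u i ^ N + Dc * (if real i < m / 2 then 1 else 0))" unfolding F_def by auto
    have "bsum p n F = Bm * bsum p n (\<lambda>i. u i ^ N) + Dc * bsum p n (\<lambda>i. if real i < m / 2 then 1 else 0)"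
      unfolding Feq bsum_add bsum_cmult ..
    then show ?thesis unfolding u_def bsum_uN[OF assms(6)] .
  qed
  also have "\<dots> \<le> Bm * (cm p N n / m ^ N) + Dc * rho p ^ n"
    using chernoff[OF assms(1,2), of n] Dc0 assms(6) by (simp add: mult_left_mono)
  finally have A: "\<bar>\<Sum>i=1..n. b i * e i\<bar> \<le> Bm * (cm p N n / m ^ N) + Dc * rho p ^ n" .
  have "\<bar>inv_moment p r n - m powr (- r) * (\<Sum>k<N. cc r k * cm p k n / m ^ k)\<bar>
      \<le> \<bar>\<Sum>i=1..n. b i * e i\<bar> + \<bar>m powr (- r) * (1 - p) ^ n * Tp r N (-1)\<bar>"
    unfolding diff by (rule abs_triangle_ineq4)
  also have "\<bar>m powr (- r) * (1 - p) ^ n * Tp r N (-1)\<bar> = m powr (- r) * (1 - p) ^ n * \<bar>Tp r N (-1)\<bar>"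
    using assms by (simp add: abs_mult)
  finally show ?thesis using A unfolding Bm_def Dc_def by linarith
qed

lemma geo_bigo:
  fixes a s p r :: real assumes "0 < a" "a < 1" "p > 0"
  shows "(\<lambda>n::nat. a ^ n) \<in> O(\<lambda>n. (real n * p) powr (- r) * real n powr s)"
proof -
  have l: "ln a < 0" using assms by simp
  have "(\<lambda>n::nat. exp (ln a * real n)) \<in> O(\<lambda>n. (real n * p) powr (- r) * real n powr s)"
    using l assms(3) by real_asymp
  moreover have "exp (ln a * real n) = a ^ n" for n :: nat
    using assms by (simp add: exp_of_nat2_mult)
  ultimately show ?thesis by simp
qed

lemma ev_mu: "p > 0 \<Longrightarrow> eventually (\<lambda>n. real n * p \<ge> 1) sequentially"
proof -
  assume p: "p > 0"
  have "eventually (\<lambda>n. nat \<lceil>1 / p\<rceil> \<le> n) sequentially" by (rule eventually_ge_at_top)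
  then show ?thesis
  proof (rule eventually_mono)
    fix n assume "nat \<lceil>1 / p\<rceil> \<le> n"
    then have "1 / p \<le> real n" by linarith
    then show "real n * p \<ge> 1" using p by (simp add: field_simps)
  qed
qed

lemma master:
  fixes E :: "nat \<Rightarrow> real" and K :: real
  assumes p: "0 < p" "p < 1" and r: "r > 0" and N: "N > 0" "even N"
    and hS: "(\<lambda>n. (\<Sum>k<N. cc r k * cm p k n / (real n * p) ^ k) - E n) \<in> O(\<lambda>n. real n powr (- K))"
    and hN: "(\<lambda>n. cm p N n / (real n * p) ^ N) \<in> O(\<lambda>n. real n powr (- K))"
  shows "(\<lambda>n. inv_moment p r n - (real n * p) powr (- r) * E n)
           \<in> O(\<lambda>n. (real n * p) powr (- r) * real n powr (- K))"
proof -
  define g where "g n = (real n * p) powr (- r) * real n powr (- K)" for n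
  define S where "S n = (\<Sum>k<N. cc r k * cm p k n / (real n * p) ^ k)" for n
  define Bc where "Bc = \<bar>cc r N\<bar> * 2 powr (r + real N)"
  define Dc where "Dc = 1 + (\<Sum>k<N. \<bar>cc r k\<bar>)"
  define T1 where "T1 = \<bar>Tp r N (-1)\<bar>"
  define G where "G n = (real n * p) powr (- r) * Bc * (cm p N n / (real n * p) ^ N)
      + Dc * rho p ^ n + (real n * p) powr (- r) * (1 - p) ^ n * T1" for n
  have G1: "(\<lambda>n. (real n * p) powr (- r) * Bc * (cm p N n / (real n * p) ^ N)) \<in> O(g)"
  proof -
    have "(\<lambda>n. (real n * p) powr (- r) * (Bc * (cm p N n / (real n * p) ^ N))) \<in> O(g)"
      unfolding g_def
    proof (rule landau_o.big.mult_left)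
      show "(\<lambda>n. Bc * (cm p N n / (real n * p) ^ N)) \<in> O(\<lambda>n. real n powr - K)"
      proof (cases "Bc = 0")
        case False
        show ?thesis by (subst landau_o.big.cmult_in_iff[OF False]) (rule hN)
      qed simp
    qed
    then show ?thesis by (simp add: mult_ac)
  qed
  have G2: "(\<lambda>n. Dc * rho p ^ n) \<in> O(g)"
    unfolding g_def using geo_bigo[OF rho_bounds[OF p] p(1)] by simp
  have G3: "(\<lambda>n. (real n * p) powr (- r) * (1 - p) ^ n * T1) \<in> O(g)"
  proof -
    have "(\<lambda>n. (1 - p) ^ n) \<in> O(g)" unfolding g_def using geo_bigo[of "1 - p" p] p by simp
    then have "(\<lambda>n. T1 * (1 - p) ^ n) \<in> O(g)" by simp
    then have "(\<lambda>n. (real n * p) powr (- r) * (T1 * (1 - p) ^ n)) \<in> O(\<lambda>n. (real n * p) powr (- r) * g n)"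
      by (rule landau_o.big.mult_left)
    also have "(\<lambda>n. (real n * p) powr (- r) * g n) \<in> O(g)"
    proof -
      have "(\<lambda>n. (real n * p) powr (- r)) \<in> O(\<lambda>_. 1)" using p r by real_asymp
      from landau_o.big.mult[OF this landau_o.big_refl[of g]] show ?thesis by simp
    qed
    finally show ?thesis by (simp add: mult_ac)
  qed
  have GO: "G \<in> O(g)" unfolding G_def[abs_def] using G1 G2 G3 by (intro sum_in_bigo) auto
  have A: "(\<lambda>n. inv_moment p r n - (real n * p) powr (- r) * S n) \<in> O(G)"
  proof (rule bigoI[where c = 1])
    show "\<forall>\<^sub>F n in sequentially. norm (inv_moment p r n - (real n * p) powr (- r) * S n) \<le> 1 * norm (G n)"
      using ev_mu[OF p(1)]
    proof (rule eventually_mono)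
      fix n assume n: "1 \<le> real n * p"
      have "\<bar>inv_moment p r n - (real n * p) powr (- r) * S n\<bar> \<le> G n"
        unfolding S_def G_def Bc_def Dc_def T1_def
        using main_bound[OF p r N refl n] by (simp add: mult_ac)
      then show "norm (inv_moment p r n - (real n * p) powr (- r) * S n) \<le> 1 * norm (G n)" by simp
    qed
  qed
  have B: "(\<lambda>n. (real n * p) powr (- r) * (S n - E n)) \<in> O(g)"
    unfolding g_def by (rule landau_o.big.mult_left) (use hS in \<open>simp add: S_def\<close>)
  have "(\<lambda>n. (inv_moment p r n - (real n * p) powr (- r) * S n) + (real n * p) powr (- r) * (S n - E n)) \<in> O(g)"
    using landau_o.big_trans[OF A GO] B by (rule sum_in_bigo)
  then show ?thesis unfolding g_def by (simp add: algebra_simps)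
qed

lemma poly_w_bigo:
  fixes R :: "real \<Rightarrow> real" and K :: nat
  assumes p: "p > 0" and R: "isCont R 0"
    and f: "\<And>n. n > 0 \<Longrightarrow> f n = (1 / (real n * p)) ^ K * R (1 / (real n * p))"
  shows "f \<in> O(\<lambda>n. real n powr - real K)"
proof -
  have ev: "eventually (\<lambda>n::nat. n > 0) sequentially" by (rule eventually_gt_at_top)
  have "(\<lambda>n. (1/p) * (1 / real n)) \<longlonglongrightarrow> 0"
    by (rule tendsto_mult_right_zero[OF lim_1_over_n])
  then have "(\<lambda>n. 1 / (real n * p)) \<longlonglongrightarrow> 0" by (simp add: mult.commute)
  then have "(\<lambda>n. R (1 / (real n * p))) \<longlonglongrightarrow> R 0" by (rule isCont_tendsto_compose[OF R])
  then have R1: "(\<lambda>n. R (1 / (real n * p))) \<in> O(\<lambda>_. 1)"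
    by (intro bigoI_tendsto[where c = "R 0"]) auto
  have W: "(\<lambda>n. (1 / (real n * p)) ^ K) \<in> O(\<lambda>n. real n powr - real K)"
  proof (rule bigoI[where c = "(1/p) ^ K"])
    show "\<forall>\<^sub>F n in sequentially. norm ((1 / (real n * p)) ^ K) \<le> (1/p) ^ K * norm (real n powr - real K)"
      using ev
    proof (rule eventually_mono)
      fix n :: nat assume n: "n > 0"
      have "(1 / (real n * p)) ^ K = (1/p) ^ K * (1 / real n) ^ K" by (simp add: power_mult_distrib[symmetric] mult.commute)
      also have "(1 / real n) ^ K = real n powr - real K"
      proof -
        have "real n powr - real K = 1 / real n powr real K" by (rule powr_minus_divide)
        also have "real n powr real K = real n ^ K" using n by (simp add: powr_realpow)
        finally show ?thesis by (simp add: power_one_over)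
      qed
      finally show "norm ((1 / (real n * p)) ^ K) \<le> (1/p) ^ K * norm (real n powr - real K)"
        using p by (simp add: abs_mult power_abs)
    qed
  qed
  have "(\<lambda>n. (1 / (real n * p)) ^ K * R (1 / (real n * p))) \<in> O(\<lambda>n. real n powr - real K * 1)"
    by (rule landau_o.big.mult[OF W R1])
  then have "(\<lambda>n. (1 / (real n * p)) ^ K * R (1 / (real n * p))) \<in> O(\<lambda>n. real n powr - real K)" by simp
  moreover have "eventually (\<lambda>n. f n = (1 / (real n * p)) ^ K * R (1 / (real n * p))) sequentially"
    using ev by (rule eventually_mono) (rule f)
  ultimately show ?thesis by (subst landau_o.big.in_cong) auto
qed

lemma sum6: "(\<Sum>k<(6::nat). (f::nat\<Rightarrow>real) k) = f 0 + f 1 + f 2 + f 3 + f 4 + f 5"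
  by (simp add: eval_nat_numeral)

lemma sum10: "(\<Sum>k<(10::nat). (f::nat\<Rightarrow>real) k) = f 0 + f 1 + f 2 + f 3 + f 4 + f 5 + f 6 + f 7 + f 8 + f 9"
  by (simp add: eval_nat_numeral)

lemma sum12: "(\<Sum>k<(12::nat). (f::nat\<Rightarrow>real) k) = f 0 + f 1 + f 2 + f 3 + f 4 + f 5 + f 6 + f 7 + f 8 + f 9 + f 10 + f 11"
  by (simp add: eval_nat_numeral)

definition Q0 :: "real \<Rightarrow> real \<Rightarrow> real" where
  "Q0 w q = (1)"

lemma q0: "x \<noteq> 0 \<Longrightarrow> P0 x q / x ^ 0 = Q0 (1 / x) q"
  unfolding P0_def Q0_def by (simp add: field_simps; algebra)

definition Q1 :: "real \<Rightarrow> real \<Rightarrow> real" where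
  "Q1 w q = 0"

lemma q1: "x \<noteq> 0 \<Longrightarrow> P1 x q / x ^ 1 = Q1 (1 / x) q"
  unfolding P1_def Q1_def by (simp add: field_simps; algebra)

definition Q2 :: "real \<Rightarrow> real \<Rightarrow> real" where
  "Q2 w q = (q * w)"

lemma q2: "x \<noteq> 0 \<Longrightarrow> P2 x q / x ^ 2 = Q2 (1 / x) q"
  unfolding P2_def Q2_def by (simp add: field_simps; algebra)

definition Q3 :: "real \<Rightarrow> real \<Rightarrow> real" where
  "Q3 w q = (- q * w^2 + 2 * q^2 * w^2)"

lemma q3: "x \<noteq> 0 \<Longrightarrow> P3 x q / x ^ 3 = Q3 (1 / x) q"
  unfolding P3_def Q3_def by (simp add: field_simps; algebra)

definition Q4 :: "real \<Rightarrow> real \<Rightarrow> real" where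
  "Q4 w q = (q * w^3 + 3 * q^2 * w^2 - 6 * q^2 * w^3 + 6 * q^3 * w^3)"

lemma q4: "x \<noteq> 0 \<Longrightarrow> P4 x q / x ^ 4 = Q4 (1 / x) q"
  unfolding P4_def Q4_def by (simp add: field_simps; algebra)

definition Q5 :: "real \<Rightarrow> real \<Rightarrow> real" where
  "Q5 w q = (- q * w^4 - 10 * q^2 * w^3 + 14 * q^2 * w^4 + 20 * q^3 * w^3 - 36 * q^3 * w^4 + 24 * q^4 * w^4)"

lemma q5: "x \<noteq> 0 \<Longrightarrow> P5 x q / x ^ 5 = Q5 (1 / x) q"
  unfolding P5_def Q5_def by (simp add: field_simps; algebra)

definition Q6 :: "real \<Rightarrow> real \<Rightarrow> real" where
  "Q6 w q = (q * w^5 + 25 * q^2 * w^4 - 30 * q^2 * w^5 + 15 * q^3 * w^3 - 130 * q^3 * w^4 + 150 * q^3 * w^5 + 130 * q^4 * w^4 - 240 * q^4 * w^5 + 120 * q^5 * w^5)"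

lemma q6: "x \<noteq> 0 \<Longrightarrow> P6 x q / x ^ 6 = Q6 (1 / x) q"
  unfolding P6_def Q6_def by (simp add: field_simps; algebra)

definition Q7 :: "real \<Rightarrow> real \<Rightarrow> real" where
  "Q7 w q = (- q * w^6 - 56 * q^2 * w^5 + 62 * q^2 * w^6 - 105 * q^3 * w^4 + 574 * q^3 * w^5 - 540 * q^3 * w^6 + 210 * q^4 * w^4 - 1386 * q^4 * w^5 + 1560 * q^4 * w^6 + 924 * q^5 * w^5 - 1800 * q^5 * w^6 + 720 * q^6 * w^6)"

lemma q7: "x \<noteq> 0 \<Longrightarrow> P7 x q / x ^ 7 = Q7 (1 / x) q"
  unfolding P7_def Q7_def by (simp add: field_simps; algebra)

definition Q8 :: "real \<Rightarrow> real \<Rightarrow> real" where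
  "Q8 w q = (q * w^7 + 119 * q^2 * w^6 - 126 * q^2 * w^7 + 490 * q^3 * w^5 - 2156 * q^3 * w^6 + 1806 * q^3 * w^7 + 105 * q^4 * w^4 - 2380 * q^4 * w^5 + 9464 * q^4 * w^6 - 8400 * q^4 * w^7 + 2380 * q^5 * w^5 - 14616 * q^5 * w^6 + 16800 * q^5 * w^7 + 7308 * q^6 * w^6 - 15120 * q^6 * w^7 + 5040 * q^7 * w^7)"

lemma q8: "x \<noteq> 0 \<Longrightarrow> P8 x q / x ^ 8 = Q8 (1 / x) q"
  unfolding P8_def Q8_def by (simp add: field_simps; algebra)

definition Q9 :: "real \<Rightarrow> real \<Rightarrow> real" where
  "Q9 w q = (- q * w^8 - 246 * q^2 * w^7 + 254 * q^2 * w^8 - 1918 * q^3 * w^6 + 7440 * q^3 * w^7 - 5796 * q^3 * w^8 - 1260 * q^4 * w^5 + 17052 * q^4 * w^6 - 52956 * q^4 * w^7 + 40824 * q^4 * w^8 + 2520 * q^5 * w^5 - 39648 * q^5 * w^6 + 142344 * q^5 * w^7 - 126000 * q^5 * w^8 + 26432 * q^6 * w^6 - 160560 * q^6 * w^7 + 191520 * q^6 * w^8 + 64224 * q^7 * w^7 - 141120 * q^7 * w^8 + 40320 * q^8 * w^8)"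

lemma q9: "x \<noteq> 0 \<Longrightarrow> P9 x q / x ^ 9 = Q9 (1 / x) q"
  unfolding P9_def Q9_def by (simp add: field_simps; algebra)

definition Q10 :: "real \<Rightarrow> real \<Rightarrow> real" where
  "Q10 w q = (q * w^9 + 501 * q^2 * w^8 - 510 * q^2 * w^9 + 6825 * q^3 * w^7 - 24438 * q^3 * w^8 + 18150 * q^3 * w^9 + 9450 * q^4 * w^6 - 99120 * q^4 * w^7 + 265278 * q^4 * w^8 - 186480 * q^4 * w^9 + 945 * q^5 * w^5 - 44100 * q^5 * w^6 + 402780 * q^5 * w^7 - 1105056 * q^5 * w^8 + 834120 * q^5 * w^9 + 44100 * q^6 * w^6 - 607320 * q^6 * w^7 + 2110968 * q^6 * w^8 - 1905120 * q^6 * w^9 + 303660 * q^7 * w^7 - 1870128 * q^7 * w^8 + 2328480 * q^7 * w^9 + 623376 * q^8 * w^8 - 1451520 * q^8 * w^9 + 362880 * q^9 * w^9)"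

lemma q10: "x \<noteq> 0 \<Longrightarrow> P10 x q / x ^ 10 = Q10 (1 / x) q"
  unfolding P10_def Q10_def by (simp add: field_simps; algebra)

definition Q11 :: "real \<Rightarrow> real \<Rightarrow> real" where
  "Q11 w q = (- q * w^10 - 1012 * q^2 * w^9 + 1022 * q^2 * w^10 - 22935 * q^3 * w^8 + 77858 * q^3 * w^9 - 55980 * q^3 * w^10 - 56980 * q^4 * w^7 + 511830 * q^4 * w^8 - 1241262 * q^4 * w^9 + 818520 * q^4 * w^10 - 17325 * q^5 * w^6 + 466620 * q^5 * w^7 - 3237300 * q^5 * w^8 + 7525188 * q^5 * w^9 - 5103000 * q^5 * w^10 + 34650 * q^6 * w^6 - 1057980 * q^6 * w^7 + 8289600 * q^6 * w^8 - 21661200 * q^6 * w^9 + 16435440 * q^6 * w^10 + 705320 * q^7 * w^7 - 9197100 * q^7 * w^8 + 31893840 * q^7 * w^9 - 29635200 * q^7 * w^10 + 3678840 * q^8 * w^8 - 23229360 * q^8 * w^9 + 30240000 * q^8 * w^10 + 6636960 * q^9 * w^9 - 16329600 * q^9 * w^10 + 3628800 * q^10 * w^10)"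

lemma q11: "x \<noteq> 0 \<Longrightarrow> P11 x q / x ^ 11 = Q11 (1 / x) q"
  unfolding P11_def Q11_def by (simp add: field_simps; algebra)

definition Q12 :: "real \<Rightarrow> real \<Rightarrow> real" where
  "Q12 w q = (q * w^11 + 2035 * q^2 * w^10 - 2046 * q^2 * w^11 + 74316 * q^3 * w^9 - 243232 * q^3 * w^10 + 171006 * q^3 * w^11 + 302995 * q^4 * w^8 - 2453748 * q^4 * w^9 + 5553988 * q^4 * w^10 - 3498000 * q^4 * w^11 + 190575 * q^5 * w^7 - 3879260 * q^5 * w^8 + 22687368 * q^5 * w^9 - 47124792 * q^5 * w^10 + 29607600 * q^5 * w^11 + 10395 * q^6 * w^6 - 866250 * q^6 * w^7 + 14978040 * q^6 * w^8 - 87791616 * q^6 * w^9 + 191818836 * q^6 * w^10 - 129230640 * q^6 * w^11 + 866250 * q^7 * w^7 - 22197560 * q^7 * w^8 + 162206748 * q^7 * w^9 - 417502800 * q^7 * w^10 + 322494480 * q^7 * w^11 + 11098780 * q^8 * w^8 - 141973128 * q^8 * w^9 + 498492720 * q^8 * w^10 - 479001600 * q^8 * w^11 + 47324376 * q^9 * w^9 - 307992960 * q^9 * w^10 + 419126400 * q^9 * w^11 + 76998240 * q^10 * w^10 - 199584000 * q^10 * w^11 + 39916800 * q^11 * w^11)"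

lemma q12: "x \<noteq> 0 \<Longrightarrow> P12 x q / x ^ 12 = Q12 (1 / x) q"
  unfolding P12_def Q12_def by (simp add: field_simps; algebra)

lemma ccG0: "cc r 0 = (1)"
  unfolding cc_def by (simp add: eval_nat_numeral field_simps)

lemma ccG1: "cc r 1 = (- r)"
  unfolding cc_def by (simp add: eval_nat_numeral field_simps)

lemma ccG2: "cc r 2 = ((1/2) * r + (1/2) * r^2)"
  unfolding cc_def by (simp add: eval_nat_numeral field_simps)

lemma ccG3: "cc r 3 = (- (1/3) * r - (1/2) * r^2 - (1/6) * r^3)"
  unfolding cc_def by (simp add: eval_nat_numeral field_simps)

lemma ccG4: "cc r 4 = ((1/4) * r + (11/24) * r^2 + (1/4) * r^3 + (1/24) * r^4)"
  unfolding cc_def by (simp add: eval_nat_numeral field_simps)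

lemma ccG5: "cc r 5 = (- (1/5) * r - (5/12) * r^2 - (7/24) * r^3 - (1/12) * r^4 - (1/120) * r^5)"
  unfolding cc_def by (simp add: eval_nat_numeral field_simps)

definition EG :: "real \<Rightarrow> real \<Rightarrow> real \<Rightarrow> real" where
  "EG x q r = 1 + r * (r + 1) * q / (2 * x) + r * (r + 1) * (r + 2) * q * (4 + q + 3 * r * q) / (24 * x ^ 2)"

definition EGw :: "real \<Rightarrow> real \<Rightarrow> real \<Rightarrow> real" where
  "EGw w q r = (1 + (1/2) * q * r * w + (1/3) * q * r * w^2 + (1/2) * q * r^2 * w + (1/2) * q * r^2 * w^2 + (1/6) * q * r^3 * w^2 + (1/12) * q^2 * r * w^2 + (3/8) * q^2 * r^2 * w^2 + (5/12) * q^2 * r^3 * w^2 + (1/8) * q^2 * r^4 * w^2)"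

lemma eG: "x \<noteq> 0 \<Longrightarrow> EG x q r = EGw (1 / x) q r"
  unfolding EG_def EGw_def by (simp add: field_simps; algebra)

definition RNG :: "real \<Rightarrow> real \<Rightarrow> real" where
  "RNG w q = (q * w^2 + 25 * q^2 * w - 30 * q^2 * w^2 + 15 * q^3 - 130 * q^3 * w + 150 * q^3 * w^2 + 130 * q^4 * w - 240 * q^4 * w^2 + 120 * q^5 * w^2)"

lemma idNG: "x \<noteq> 0 \<Longrightarrow> P6 x q / x ^ 6 = (1 / x) ^ 3 * RNG (1 / x) q"
  unfolding q6 proof - have "Q6 w q = w ^ 3 * RNG w q" for w unfolding Q6_def RNG_def by algebra
  then show "x \<noteq> 0 \<Longrightarrow> Q6 (1 / x) q = (1 / x) ^ 3 * RNG (1 / x) q" by simp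
qed

definition RSG :: "real \<Rightarrow> real \<Rightarrow> real \<Rightarrow> real" where
  "RSG w q r = ((1/4) * q * r + (1/5) * q * r * w + (11/24) * q * r^2 + (5/12) * q * r^2 * w + (1/4) * q * r^3 + (7/24) * q * r^3 * w + (1/24) * q * r^4 + (1/12) * q * r^4 * w + (1/120) * q * r^5 * w + (1/2) * q^2 * r - (14/5) * q^2 * r * w + (17/12) * q^2 * r^2 - (35/6) * q^2 * r^2 * w + (17/12) * q^2 * r^3 - (49/12) * q^2 * r^3 * w + (7/12) * q^2 * r^4 - (7/6) * q^2 * r^4 * w + (1/12) * q^2 * r^5 - (7/60) * q^2 * r^5 * w - (5/2) * q^3 * r + (36/5) * q^3 * r * w - (67/12) * q^3 * r^2 + 15 * q^3 * r^2 * w - (13/3) * q^3 * r^3 + (21/2) * q^3 * r^3 * w - (17/12) * q^3 * r^4 + 3 * q^3 * r^4 * w - (1/6) * q^3 * r^5 + (3/10) * q^3 * r^5 * w - (24/5) * q^4 * r * w - 10 * q^4 * r^2 * w - 7 * q^4 * r^3 * w - 2 * q^4 * r^4 * w - (1/5) * q^4 * r^5 * w)"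

lemma polySG: "(cc r 0 * Q0 w q + cc r 1 * Q1 w q + cc r 2 * Q2 w q + cc r 3 * Q3 w q + cc r 4 * Q4 w q + cc r 5 * Q5 w q) - EGw w q r = w ^ 3 * RSG w q r"
  unfolding EGw_def RSG_def Q0_def Q1_def Q2_def Q3_def Q4_def Q5_def ccG0 ccG1 ccG2 ccG3 ccG4 ccG5 by algebra

lemma idSG: assumes "x \<noteq> 0" shows "(cc r 0 * P0 x q / x ^ 0 + cc r 1 * P1 x q / x ^ 1 + cc r 2 * P2 x q / x ^ 2 + cc r 3 * P3 x q / x ^ 3 + cc r 4 * P4 x q / x ^ 4 + cc r 5 * P5 x q / x ^ 5) - EG x q r = (1 / x) ^ 3 * RSG (1 / x) q r"
proof -
  have "(cc r 0 * P0 x q / x ^ 0 + cc r 1 * P1 x q / x ^ 1 + cc r 2 * P2 x q / x ^ 2 + cc r 3 * P3 x q / x ^ 3 + cc r 4 * P4 x q / x ^ 4 + cc r 5 * P5 x q / x ^ 5) = (cc r 0 * (P0 x q / x ^ 0) + cc r 1 * (P1 x q / x ^ 1) + cc r 2 * (P2 x q / x ^ 2) + cc r 3 * (P3 x q / x ^ 3) + cc r 4 * (P4 x q / x ^ 4) + cc r 5 * (P5 x q / x ^ 5))" by simp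
  also have "\<dots> = (cc r 0 * Q0 (1 / x) q + cc r 1 * Q1 (1 / x) q + cc r 2 * Q2 (1 / x) q + cc r 3 * Q3 (1 / x) q + cc r 4 * Q4 (1 / x) q + cc r 5 * Q5 (1 / x) q)"
    unfolding q0[OF assms] q1[OF assms] q2[OF assms] q3[OF assms] q4[OF assms] q5[OF assms] ..
  finally have X: "(cc r 0 * P0 x q / x ^ 0 + cc r 1 * P1 x q / x ^ 1 + cc r 2 * P2 x q / x ^ 2 + cc r 3 * P3 x q / x ^ 3 + cc r 4 * P4 x q / x ^ 4 + cc r 5 * P5 x q / x ^ 5) = (cc r 0 * Q0 (1 / x) q + cc r 1 * Q1 (1 / x) q + cc r 2 * Q2 (1 / x) q + cc r 3 * Q3 (1 / x) q + cc r 4 * Q4 (1 / x) q + cc r 5 * Q5 (1 / x) q)" .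
  show ?thesis unfolding eG[OF assms] X by (rule polySG)
qed

lemma ccA0: "cc 1 0 = (1)"
  unfolding cc_def by (simp add: eval_nat_numeral field_simps)

lemma ccA1: "cc 1 1 = (- 1)"
  unfolding cc_def by (simp add: eval_nat_numeral field_simps)

lemma ccA2: "cc 1 2 = (1)"
  unfolding cc_def by (simp add: eval_nat_numeral field_simps)

lemma ccA3: "cc 1 3 = (- 1)"
  unfolding cc_def by (simp add: eval_nat_numeral field_simps)

lemma ccA4: "cc 1 4 = (1)"
  unfolding cc_def by (simp add: eval_nat_numeral field_simps)

lemma ccA5: "cc 1 5 = (- 1)"
  unfolding cc_def by (simp add: eval_nat_numeral field_simps)

lemma ccA6: "cc 1 6 = (1)"
  unfolding cc_def by (simp add: eval_nat_numeral field_simps)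

lemma ccA7: "cc 1 7 = (- 1)"
  unfolding cc_def by (simp add: eval_nat_numeral field_simps)

lemma ccA8: "cc 1 8 = (1)"
  unfolding cc_def by (simp add: eval_nat_numeral field_simps)

lemma ccA9: "cc 1 9 = (- 1)"
  unfolding cc_def by (simp add: eval_nat_numeral field_simps)

lemma ccA10: "cc 1 10 = (1)"
  unfolding cc_def by (simp add: eval_nat_numeral field_simps)

lemma ccA11: "cc 1 11 = (- 1)"
  unfolding cc_def by (simp add: eval_nat_numeral field_simps)

definition EA :: "real \<Rightarrow> real \<Rightarrow> real" where
  "EA x q = 1 + q / x + q * (1 + q) / x ^ 2 + q * (1 + 4 * q + q ^ 2) / x ^ 3 + q * (1 + q) * (1 + 10 * q + q ^ 2) / x ^ 4 + q * (1 + 26 * q + 66 * q ^ 2 + 26 * q ^ 3 + q ^ 4) / x ^ 5"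

definition EAw :: "real \<Rightarrow> real \<Rightarrow> real" where
  "EAw w q = (1 + q * w + q * w^2 + q * w^3 + q * w^4 + q * w^5 + q^2 * w^2 + 4 * q^2 * w^3 + 11 * q^2 * w^4 + 26 * q^2 * w^5 + q^3 * w^3 + 11 * q^3 * w^4 + 66 * q^3 * w^5 + q^4 * w^4 + 26 * q^4 * w^5 + q^5 * w^5)"

lemma eA: "x \<noteq> 0 \<Longrightarrow> EA x q = EAw (1 / x) q"
  unfolding EA_def EAw_def by (simp add: field_simps; algebra)

definition RNA :: "real \<Rightarrow> real \<Rightarrow> real" where
  "RNA w q = (q * w^5 + 2035 * q^2 * w^4 - 2046 * q^2 * w^5 + 74316 * q^3 * w^3 - 243232 * q^3 * w^4 + 171006 * q^3 * w^5 + 302995 * q^4 * w^2 - 2453748 * q^4 * w^3 + 5553988 * q^4 * w^4 - 3498000 * q^4 * w^5 + 190575 * q^5 * w - 3879260 * q^5 * w^2 + 22687368 * q^5 * w^3 - 47124792 * q^5 * w^4 + 29607600 * q^5 * w^5 + 10395 * q^6 - 866250 * q^6 * w + 14978040 * q^6 * w^2 - 87791616 * q^6 * w^3 + 191818836 * q^6 * w^4 - 129230640 * q^6 * w^5 + 866250 * q^7 * w - 22197560 * q^7 * w^2 + 162206748 * q^7 * w^3 - 417502800 * q^7 * w^4 + 322494480 * q^7 * w^5 + 11098780 * q^8 * w^2 - 141973128 * q^8 * w^3 + 498492720 * q^8 * w^4 - 479001600 * q^8 * w^5 + 47324376 * q^9 * w^3 - 307992960 * q^9 * w^4 + 419126400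 * q^9 * w^5 + 76998240 * q^10 * w^4 - 199584000 * q^10 * w^5 + 39916800 * q^11 * w^5)"

lemma idNA: "x \<noteq> 0 \<Longrightarrow> P12 x q / x ^ 12 = (1 / x) ^ 6 * RNA (1 / x) q"
  unfolding q12 proof - have "Q12 w q = w ^ 6 * RNA w q" for w unfolding Q12_def RNA_def by algebra
  then show "x \<noteq> 0 \<Longrightarrow> Q12 (1 / x) q = (1 / x) ^ 6 * RNA (1 / x) q" by simp
qed

definition RSA :: "real \<Rightarrow> real \<Rightarrow> real" where
  "RSA w q = (q + q * w + q * w^2 + q * w^3 + q * w^4 + 57 * q^2 + 120 * q^2 * w + 247 * q^2 * w^2 + 502 * q^2 * w^3 - 1022 * q^2 * w^4 + 302 * q^3 + 1191 * q^3 * w + 4293 * q^3 * w^2 - 59708 * q^3 * w^3 + 55980 * q^3 * w^4 + 302 * q^4 + 2416 * q^4 * w - 287376 * q^4 * w^2 + 1054782 * q^4 * w^3 - 818520 * q^4 * w^4 + 57 * q^5 - 189384 * q^5 * w + 2258244 * q^5 * w^2 - 6691068 * q^5 * w^3 + 5103000 * q^5 * w^4 - 10394 * q^6 + 596100 * q^6 * w - 6370152 * q^6 * w^2 + 19756080 * q^6 * w^3 - 16435440 * q^6 * w^4 - 460844 * q^7 * w + 7468092 * q^7 * w^2 - 29565360 * q^7 * w^3 + 29635200 * q^7 * w^4 - 3095784 * q^8 * w^2 + 21777840 * q^8 * w^3 - 30240000 * q^8 * w^4 - 6274080 * q^9 * w^3 + 16329600 * q^9 * w^4 - 3628800 * q^10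 * w^4)"

lemma polySA: "(cc 1 0 * Q0 w q + cc 1 1 * Q1 w q + cc 1 2 * Q2 w q + cc 1 3 * Q3 w q + cc 1 4 * Q4 w q + cc 1 5 * Q5 w q + cc 1 6 * Q6 w q + cc 1 7 * Q7 w q + cc 1 8 * Q8 w q + cc 1 9 * Q9 w q + cc 1 10 * Q10 w q + cc 1 11 * Q11 w q) - EAw w q = w ^ 6 * RSA w q"
  unfolding EAw_def RSA_def Q0_def Q1_def Q2_def Q3_def Q4_def Q5_def Q6_def Q7_def Q8_def Q9_def Q10_def Q11_def ccA0 ccA1 ccA2 ccA3 ccA4 ccA5 ccA6 ccA7 ccA8 ccA9 ccA10 ccA11 by algebra

lemma idSA: assumes "x \<noteq> 0" shows "(cc 1 0 * P0 x q / x ^ 0 + cc 1 1 * P1 x q / x ^ 1 + cc 1 2 * P2 x q / x ^ 2 + cc 1 3 * P3 x q / x ^ 3 + cc 1 4 * P4 x q / x ^ 4 + cc 1 5 * P5 x q / x ^ 5 + cc 1 6 * P6 x q / x ^ 6 + cc 1 7 * P7 x q / x ^ 7 + cc 1 8 * P8 x q / x ^ 8 + cc 1 9 * P9 x q / x ^ 9 + cc 1 10 * P10 x q / x ^ 10 + cc 1 11 * P11 x q / x ^ 11) - EA x q = (1 / x) ^ 6 * RSA (1 / x) q"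
proof -
  have "(cc 1 0 * P0 x q / x ^ 0 + cc 1 1 * P1 x q / x ^ 1 + cc 1 2 * P2 x q / x ^ 2 + cc 1 3 * P3 x q / x ^ 3 + cc 1 4 * P4 x q / x ^ 4 + cc 1 5 * P5 x q / x ^ 5 + cc 1 6 * P6 x q / x ^ 6 + cc 1 7 * P7 x q / x ^ 7 + cc 1 8 * P8 x q / x ^ 8 + cc 1 9 * P9 x q / x ^ 9 + cc 1 10 * P10 x q / x ^ 10 + cc 1 11 * P11 x q / x ^ 11) = (cc 1 0 * (P0 x q / x ^ 0) + cc 1 1 * (P1 x q / x ^ 1) + cc 1 2 * (P2 x q / x ^ 2) + cc 1 3 * (P3 x q / x ^ 3) + cc 1 4 * (P4 x q / x ^ 4) + cc 1 5 * (P5 x q / x ^ 5) + cc 1 6 * (P6 x q / x ^ 6) + cc 1 7 * (P7 x q / x ^ 7) + cc 1 8 * (P8 x q / x ^ 8) + cc 1 9 * (P9 x q / x ^ 9) + cc 1 10 * (P10 x q / x ^ 10) + cc 1 11 * (P11 x q / x ^ 11))" by simp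
  also have "\<dots> = (cc 1 0 * Q0 (1 / x) q + cc 1 1 * Q1 (1 / x) q + cc 1 2 * Q2 (1 / x) q + cc 1 3 * Q3 (1 / x) q + cc 1 4 * Q4 (1 / x) q + cc 1 5 * Q5 (1 / x) q + cc 1 6 * Q6 (1 / x) q + cc 1 7 * Q7 (1 / x) q + cc 1 8 * Q8 (1 / x) q + cc 1 9 * Q9 (1 / x) q + cc 1 10 * Q10 (1 / x) q + cc 1 11 * Q11 (1 / x) q)"
    unfolding q0[OF assms] q1[OF assms] q2[OF assms] q3[OF assms] q4[OF assms] q5[OF assms] q6[OF assms] q7[OF assms] q8[OF assms] q9[OF assms] q10[OF assms] q11[OF assms] ..
  finally have X: "(cc 1 0 * P0 x q / x ^ 0 + cc 1 1 * P1 x q / x ^ 1 + cc 1 2 * P2 x q / x ^ 2 + cc 1 3 * P3 x q / x ^ 3 + cc 1 4 * P4 x q / x ^ 4 + cc 1 5 * P5 x q / x ^ 5 + cc 1 6 * P6 x q / x ^ 6 + cc 1 7 * P7 x q / x ^ 7 + cc 1 8 * P8 x q / x ^ 8 + cc 1 9 * P9 x q / x ^ 9 + cc 1 10 * P10 x q / x ^ 10 + cc 1 11 * P11 x q / x ^ 11) = (cc 1 0 * Q0 (1 / x) q + cc 1 1 * Q1 (1 / x) q + cc 1 2 * Q2 (1 / x) q + cc 1 3 * Q3 (1 / x) q + cc 1 4 * Q4 (1 / x) q + cc 1 5 * Q5 (1 / x) q + cc 1 6 * Q6 (1 / x) q + cc 1 7 * Q7 (1 / x) q + cc 1 8 * Q8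 (1 / x) q + cc 1 9 * Q9 (1 / x) q + cc 1 10 * Q10 (1 / x) q + cc 1 11 * Q11 (1 / x) q)" .
  show ?thesis unfolding eA[OF assms] X by (rule polySA)
qed

lemma ccB0: "cc 2 0 = (1)"
  unfolding cc_def by (simp add: eval_nat_numeral field_simps)

lemma ccB1: "cc 2 1 = (- 2)"
  unfolding cc_def by (simp add: eval_nat_numeral field_simps)

lemma ccB2: "cc 2 2 = (3)"
  unfolding cc_def by (simp add: eval_nat_numeral field_simps)

lemma ccB3: "cc 2 3 = (- 4)"
  unfolding cc_def by (simp add: eval_nat_numeral field_simps)

lemma ccB4: "cc 2 4 = (5)"
  unfolding cc_def by (simp add: eval_nat_numeral field_simps)

lemma ccB5: "cc 2 5 = (- 6)"
  unfolding cc_def by (simp add: eval_nat_numeral field_simps)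

lemma ccB6: "cc 2 6 = (7)"
  unfolding cc_def by (simp add: eval_nat_numeral field_simps)

lemma ccB7: "cc 2 7 = (- 8)"
  unfolding cc_def by (simp add: eval_nat_numeral field_simps)

lemma ccB8: "cc 2 8 = (9)"
  unfolding cc_def by (simp add: eval_nat_numeral field_simps)

lemma ccB9: "cc 2 9 = (- 10)"
  unfolding cc_def by (simp add: eval_nat_numeral field_simps)

definition EB :: "real \<Rightarrow> real \<Rightarrow> real" where
  "EB x q = 1 + 3 * q / x + q * (4 + 7 * q) / x ^ 2 + 5 * q * (1 + 6 * q + 3 * q ^ 2) / x ^ 3 + q * (6 + 91 * q + 146 * q ^ 2 + 31 * q ^ 3) / x ^ 4"

definition EBw :: "real \<Rightarrow> real \<Rightarrow> real" where
  "EBw w q = (1 + 3 * q * w + 4 * q * w^2 + 5 * q * w^3 + 6 * q * w^4 + 7 * q^2 * w^2 + 30 * q^2 * w^3 + 91 * q^2 * w^4 + 15 * q^3 * w^3 + 146 * q^3 * w^4 + 31 * q^4 * w^4)"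

lemma eB: "x \<noteq> 0 \<Longrightarrow> EB x q = EBw (1 / x) q"
  unfolding EB_def EBw_def by (simp add: field_simps; algebra)

definition RNB :: "real \<Rightarrow> real \<Rightarrow> real" where
  "RNB w q = (q * w^4 + 501 * q^2 * w^3 - 510 * q^2 * w^4 + 6825 * q^3 * w^2 - 24438 * q^3 * w^3 + 18150 * q^3 * w^4 + 9450 * q^4 * w - 99120 * q^4 * w^2 + 265278 * q^4 * w^3 - 186480 * q^4 * w^4 + 945 * q^5 - 44100 * q^5 * w + 402780 * q^5 * w^2 - 1105056 * q^5 * w^3 + 834120 * q^5 * w^4 + 44100 * q^6 * w - 607320 * q^6 * w^2 + 2110968 * q^6 * w^3 - 1905120 * q^6 * w^4 + 303660 * q^7 * w^2 - 1870128 * q^7 * w^3 + 2328480 * q^7 * w^4 + 623376 * q^8 * w^3 - 1451520 * q^8 * w^4 + 362880 * q^9 * w^4)"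

lemma idNB: "x \<noteq> 0 \<Longrightarrow> P10 x q / x ^ 10 = (1 / x) ^ 5 * RNB (1 / x) q"
  unfolding q10 proof - have "Q10 w q = w ^ 5 * RNB w q" for w unfolding Q10_def RNB_def by algebra
  then show "x \<noteq> 0 \<Longrightarrow> Q10 (1 / x) q = (1 / x) ^ 5 * RNB (1 / x) q" by simp
qed

definition RSB :: "real \<Rightarrow> real \<Rightarrow> real" where
  "RSB w q = (7 * q + 8 * q * w + 9 * q * w^2 + 10 * q * w^3 + 238 * q^2 + 575 * q^2 * w + 1326 * q^2 * w^2 - 2540 * q^2 * w^3 + 868 * q^3 + 4096 * q^3 * w - 58146 * q^3 * w^2 + 57960 * q^3 * w^3 + 588 * q^4 - 97824 * q^4 * w + 453960 * q^4 * w^2 - 408240 * q^4 * w^3 - 10332 * q^5 + 279336 * q^5 * w - 1272240 * q^5 * w^2 + 1260000 * q^5 * w^3 - 204308 * q^6 * w + 1469520 * q^6 * w^2 - 1915200 * q^6 * w^3 - 596880 * q^7 * w^2 + 1411200 * q^7 * w^3 - 403200 * q^8 * w^3)"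

lemma polySB: "(cc 2 0 * Q0 w q + cc 2 1 * Q1 w q + cc 2 2 * Q2 w q + cc 2 3 * Q3 w q + cc 2 4 * Q4 w q + cc 2 5 * Q5 w q + cc 2 6 * Q6 w q + cc 2 7 * Q7 w q + cc 2 8 * Q8 w q + cc 2 9 * Q9 w q) - EBw w q = w ^ 5 * RSB w q"
  unfolding EBw_def RSB_def Q0_def Q1_def Q2_def Q3_def Q4_def Q5_def Q6_def Q7_def Q8_def Q9_def ccB0 ccB1 ccB2 ccB3 ccB4 ccB5 ccB6 ccB7 ccB8 ccB9 by algebra

lemma idSB: assumes "x \<noteq> 0" shows "(cc 2 0 * P0 x q / x ^ 0 + cc 2 1 * P1 x q / x ^ 1 + cc 2 2 * P2 x q / x ^ 2 + cc 2 3 * P3 x q / x ^ 3 + cc 2 4 * P4 x q / x ^ 4 + cc 2 5 * P5 x q / x ^ 5 + cc 2 6 * P6 x q / x ^ 6 + cc 2 7 * P7 x q / x ^ 7 + cc 2 8 * P8 x q / x ^ 8 + cc 2 9 * P9 x q / x ^ 9) - EB x q = (1 / x) ^ 5 * RSB (1 / x) q"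
proof -
  have "(cc 2 0 * P0 x q / x ^ 0 + cc 2 1 * P1 x q / x ^ 1 + cc 2 2 * P2 x q / x ^ 2 + cc 2 3 * P3 x q / x ^ 3 + cc 2 4 * P4 x q / x ^ 4 + cc 2 5 * P5 x q / x ^ 5 + cc 2 6 * P6 x q / x ^ 6 + cc 2 7 * P7 x q / x ^ 7 + cc 2 8 * P8 x q / x ^ 8 + cc 2 9 * P9 x q / x ^ 9) = (cc 2 0 * (P0 x q / x ^ 0) + cc 2 1 * (P1 x q / x ^ 1) + cc 2 2 * (P2 x q / x ^ 2) + cc 2 3 * (P3 x q / x ^ 3) + cc 2 4 * (P4 x q / x ^ 4) + cc 2 5 * (P5 x q / x ^ 5) + cc 2 6 * (P6 x q / x ^ 6) + cc 2 7 * (P7 x q / x ^ 7) + cc 2 8 * (P8 x q / x ^ 8) + cc 2 9 * (P9 x q / x ^ 9))" by simp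
  also have "\<dots> = (cc 2 0 * Q0 (1 / x) q + cc 2 1 * Q1 (1 / x) q + cc 2 2 * Q2 (1 / x) q + cc 2 3 * Q3 (1 / x) q + cc 2 4 * Q4 (1 / x) q + cc 2 5 * Q5 (1 / x) q + cc 2 6 * Q6 (1 / x) q + cc 2 7 * Q7 (1 / x) q + cc 2 8 * Q8 (1 / x) q + cc 2 9 * Q9 (1 / x) q)"
    unfolding q0[OF assms] q1[OF assms] q2[OF assms] q3[OF assms] q4[OF assms] q5[OF assms] q6[OF assms] q7[OF assms] q8[OF assms] q9[OF assms] ..
  finally have X: "(cc 2 0 * P0 x q / x ^ 0 + cc 2 1 * P1 x q / x ^ 1 + cc 2 2 * P2 x q / x ^ 2 + cc 2 3 * P3 x q / x ^ 3 + cc 2 4 * P4 x q / x ^ 4 + cc 2 5 * P5 x q / x ^ 5 + cc 2 6 * P6 x q / x ^ 6 + cc 2 7 * P7 x q / x ^ 7 + cc 2 8 * P8 x q / x ^ 8 + cc 2 9 * P9 x q / x ^ 9) = (cc 2 0 * Q0 (1 / x) q + cc 2 1 * Q1 (1 / x) q + cc 2 2 * Q2 (1 / x) q + cc 2 3 * Q3 (1 / x) q + cc 2 4 * Q4 (1 / x) q + cc 2 5 * Q5 (1 / x) q + cc 2 6 * Q6 (1 / x) q + cc 2 7 * Q7 (1 / x) q + cc 2 8 * Q8 (1 / x) q + cc 2 9 * Q9 (1 / x) q)" .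
  show ?thesis unfolding eB[OF assms] X by (rule polySB)
qed

lemma ccC0: "cc 3 0 = (1)"
  unfolding cc_def by (simp add: eval_nat_numeral field_simps)

lemma ccC1: "cc 3 1 = (- 3)"
  unfolding cc_def by (simp add: eval_nat_numeral field_simps)

lemma ccC2: "cc 3 2 = (6)"
  unfolding cc_def by (simp add: eval_nat_numeral field_simps)

lemma ccC3: "cc 3 3 = (- 10)"
  unfolding cc_def by (simp add: eval_nat_numeral field_simps)

lemma ccC4: "cc 3 4 = (15)"
  unfolding cc_def by (simp add: eval_nat_numeral field_simps)

lemma ccC5: "cc 3 5 = (- 21)"
  unfolding cc_def by (simp add: eval_nat_numeral field_simps)

lemma ccC6: "cc 3 6 = (28)"
  unfolding cc_def by (simp add: eval_nat_numeral field_simps)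

lemma ccC7: "cc 3 7 = (- 36)"
  unfolding cc_def by (simp add: eval_nat_numeral field_simps)

lemma ccC8: "cc 3 8 = (45)"
  unfolding cc_def by (simp add: eval_nat_numeral field_simps)

lemma ccC9: "cc 3 9 = (- 55)"
  unfolding cc_def by (simp add: eval_nat_numeral field_simps)

definition EC :: "real \<Rightarrow> real \<Rightarrow> real" where
  "EC x q = 1 + 6 * q / x + 5 * q * (2 + 5 * q) / x ^ 2 + 15 * q * (1 + 8 * q + 6 * q ^ 2) / x ^ 3 + 7 * q * (3 + 58 * q + 128 * q ^ 2 + 43 * q ^ 3) / x ^ 4"

definition ECw :: "real \<Rightarrow> real \<Rightarrow> real" where
  "ECw w q = (1 + 6 * q * w + 10 * q * w^2 + 15 * q * w^3 + 21 * q * w^4 + 25 * q^2 * w^2 + 120 * q^2 * w^3 + 406 * q^2 * w^4 + 90 * q^3 * w^3 + 896 * q^3 * w^4 + 301 * q^4 * w^4)"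

lemma eC: "x \<noteq> 0 \<Longrightarrow> EC x q = ECw (1 / x) q"
  unfolding EC_def ECw_def by (simp add: field_simps; algebra)

definition RNC :: "real \<Rightarrow> real \<Rightarrow> real" where
  "RNC w q = (q * w^4 + 501 * q^2 * w^3 - 510 * q^2 * w^4 + 6825 * q^3 * w^2 - 24438 * q^3 * w^3 + 18150 * q^3 * w^4 + 9450 * q^4 * w - 99120 * q^4 * w^2 + 265278 * q^4 * w^3 - 186480 * q^4 * w^4 + 945 * q^5 - 44100 * q^5 * w + 402780 * q^5 * w^2 - 1105056 * q^5 * w^3 + 834120 * q^5 * w^4 + 44100 * q^6 * w - 607320 * q^6 * w^2 + 2110968 * q^6 * w^3 - 1905120 * q^6 * w^4 + 303660 * q^7 * w^2 - 1870128 * q^7 * w^3 + 2328480 * q^7 * w^4 + 623376 * q^8 * w^3 - 1451520 * q^8 * w^4 + 362880 * q^9 * w^4)"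

lemma idNC: "x \<noteq> 0 \<Longrightarrow> P10 x q / x ^ 10 = (1 / x) ^ 5 * RNC (1 / x) q"
  unfolding q10 proof - have "Q10 w q = w ^ 5 * RNC w q" for w unfolding Q10_def RNC_def by algebra
  then show "x \<noteq> 0 \<Longrightarrow> Q10 (1 / x) q = (1 / x) ^ 5 * RNC (1 / x) q" by simp
qed

definition RSC :: "real \<Rightarrow> real \<Rightarrow> real" where
  "RSC w q = (28 * q + 36 * q * w + 45 * q * w^2 + 55 * q * w^3 + 1176 * q^2 + 3123 * q^2 * w + 7860 * q^2 * w^2 - 13970 * q^2 * w^3 + 5586 * q^3 + 27910 * q^3 * w - 327930 * q^3 * w^2 + 318780 * q^3 * w^3 + 5376 * q^4 - 568140 * q^4 * w + 2534580 * q^4 * w^2 - 2245320 * q^4 * w^3 - 61404 * q^5 + 1587720 * q^5 * w - 7072920 * q^5 * w^2 + 6930000 * q^5 * w^3 - 1150820 * q^6 * w + 8150400 * q^6 * w^2 - 10533600 * q^6 * w^3 - 3305520 * q^7 * w^2 + 7761600 * q^7 * w^3 - 2217600 * q^8 * w^3)"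

lemma polySC: "(cc 3 0 * Q0 w q + cc 3 1 * Q1 w q + cc 3 2 * Q2 w q + cc 3 3 * Q3 w q + cc 3 4 * Q4 w q + cc 3 5 * Q5 w q + cc 3 6 * Q6 w q + cc 3 7 * Q7 w q + cc 3 8 * Q8 w q + cc 3 9 * Q9 w q) - ECw w q = w ^ 5 * RSC w q"
  unfolding ECw_def RSC_def Q0_def Q1_def Q2_def Q3_def Q4_def Q5_def Q6_def Q7_def Q8_def Q9_def ccC0 ccC1 ccC2 ccC3 ccC4 ccC5 ccC6 ccC7 ccC8 ccC9 by algebra

lemma idSC: assumes "x \<noteq> 0" shows "(cc 3 0 * P0 x q / x ^ 0 + cc 3 1 * P1 x q / x ^ 1 + cc 3 2 * P2 x q / x ^ 2 + cc 3 3 * P3 x q / x ^ 3 + cc 3 4 * P4 x q / x ^ 4 + cc 3 5 * P5 x q / x ^ 5 + cc 3 6 * P6 x q / x ^ 6 + cc 3 7 * P7 x q / x ^ 7 + cc 3 8 * P8 x q / x ^ 8 + cc 3 9 * P9 x q / x ^ 9) - EC x q = (1 / x) ^ 5 * RSC (1 / x) q"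
proof -
  have "(cc 3 0 * P0 x q / x ^ 0 + cc 3 1 * P1 x q / x ^ 1 + cc 3 2 * P2 x q / x ^ 2 + cc 3 3 * P3 x q / x ^ 3 + cc 3 4 * P4 x q / x ^ 4 + cc 3 5 * P5 x q / x ^ 5 + cc 3 6 * P6 x q / x ^ 6 + cc 3 7 * P7 x q / x ^ 7 + cc 3 8 * P8 x q / x ^ 8 + cc 3 9 * P9 x q / x ^ 9) = (cc 3 0 * (P0 x q / x ^ 0) + cc 3 1 * (P1 x q / x ^ 1) + cc 3 2 * (P2 x q / x ^ 2) + cc 3 3 * (P3 x q / x ^ 3) + cc 3 4 * (P4 x q / x ^ 4) + cc 3 5 * (P5 x q / x ^ 5) + cc 3 6 * (P6 x q / x ^ 6) + cc 3 7 * (P7 x q / x ^ 7) + cc 3 8 * (P8 x q / x ^ 8) + cc 3 9 * (P9 x q / x ^ 9))" by simp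
  also have "\<dots> = (cc 3 0 * Q0 (1 / x) q + cc 3 1 * Q1 (1 / x) q + cc 3 2 * Q2 (1 / x) q + cc 3 3 * Q3 (1 / x) q + cc 3 4 * Q4 (1 / x) q + cc 3 5 * Q5 (1 / x) q + cc 3 6 * Q6 (1 / x) q + cc 3 7 * Q7 (1 / x) q + cc 3 8 * Q8 (1 / x) q + cc 3 9 * Q9 (1 / x) q)"
    unfolding q0[OF assms] q1[OF assms] q2[OF assms] q3[OF assms] q4[OF assms] q5[OF assms] q6[OF assms] q7[OF assms] q8[OF assms] q9[OF assms] ..
  finally have X: "(cc 3 0 * P0 x q / x ^ 0 + cc 3 1 * P1 x q / x ^ 1 + cc 3 2 * P2 x q / x ^ 2 + cc 3 3 * P3 x q / x ^ 3 + cc 3 4 * P4 x q / x ^ 4 + cc 3 5 * P5 x q / x ^ 5 + cc 3 6 * P6 x q / x ^ 6 + cc 3 7 * P7 x q / x ^ 7 + cc 3 8 * P8 x q / x ^ 8 + cc 3 9 * P9 x q / x ^ 9) = (cc 3 0 * Q0 (1 / x) q + cc 3 1 * Q1 (1 / x) q + cc 3 2 * Q2 (1 / x) q + cc 3 3 * Q3 (1 / x) q + cc 3 4 * Q4 (1 / x) q + cc 3 5 * Q5 (1 / x) q + cc 3 6 * Q6 (1 / x) q + cc 3 7 * Q7 (1 / x) q + cc 3 8 * Q8 (1 / x) q + cc 3 9 * Q9 (1 / x) q)" .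
  show ?thesis unfolding eC[OF assms] X by (rule polySC)
qed

lemma masterG:
  assumes p: "0 < p" "p < 1" and q: "q = 1 - p" and r: "r > 0"
  shows "(\<lambda>n. inv_moment p r n - (real n * p) powr (- r) * EG (real n * p) q r)
           \<in> O(\<lambda>n. (real n * p) powr (- r) * real n powr (- 3))"
proof (rule master[where N=6])
  show "0 < (r::real)" by (rule r)
  show "(\<lambda>n. (\<Sum>k<6. cc r k * cm p k n / (real n * p) ^ k) - EG (real n * p) q r) \<in> O(\<lambda>n. real n powr - 3)"
  proof -
    have "(\<lambda>n. (\<Sum>k<6. cc r k * cm p k n / (real n * p) ^ k) - EG (real n * p) q r) \<in> O(\<lambda>n. real n powr - real (3::nat))"
    proof (rule poly_w_bigo[where R="\<lambda>w. RSG w q r"])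
      show "isCont (\<lambda>w. RSG w q r) 0" unfolding RSG_def by (intro continuous_intros)
      fix n :: nat assume "n > 0"
      then have x: "real n * p \<noteq> 0" using p by simp
      show "(\<Sum>k<6. cc r k * cm p k n / (real n * p) ^ k) - EG (real n * p) q r = (1 / (real n * p)) ^ 3 * RSG (1 / (real n * p)) q r"
        unfolding sum6 cm0 cm1 cm2 cm3 cm4 cm5 q[symmetric] by (rule idSG[OF x])
    qed (use p in auto)
    then show ?thesis by simp
  qed
  show "(\<lambda>n. cm p 6 n / (real n * p) ^ 6) \<in> O(\<lambda>n. real n powr - 3)"
  proof -
    have "(\<lambda>n. cm p 6 n / (real n * p) ^ 6) \<in> O(\<lambda>n. real n powr - real (3::nat))"
    proof (rule poly_w_bigo[where R="\<lambda>w. RNG w q"])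
      show "isCont (\<lambda>w. RNG w q) 0" unfolding RNG_def by (intro continuous_intros)
      fix n :: nat assume "n > 0"
      then have x: "real n * p \<noteq> 0" using p by simp
      show "cm p 6 n / (real n * p) ^ 6 = (1 / (real n * p)) ^ 3 * RNG (1 / (real n * p)) q"
        unfolding cm6 q[symmetric] by (rule idNG[OF x])
    qed (use p in auto)
    then show ?thesis by simp
  qed
qed (use p in auto)

lemma masterA:
  assumes p: "0 < p" "p < 1" and q: "q = 1 - p"
  shows "(\<lambda>n. inv_moment p 1 n - (real n * p) powr (- 1) * EA (real n * p) q)
           \<in> O(\<lambda>n. (real n * p) powr (- 1) * real n powr (- 6))"
proof (rule master[where N=12])
  show "0 < (1::real)" by simp
  show "(\<lambda>n. (\<Sum>k<12. cc 1 k * cm p k n / (real n * p) ^ k) - EA (real n * p) q) \<in> O(\<lambda>n. real n powr - 6)"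
  proof -
    have "(\<lambda>n. (\<Sum>k<12. cc 1 k * cm p k n / (real n * p) ^ k) - EA (real n * p) q) \<in> O(\<lambda>n. real n powr - real (6::nat))"
    proof (rule poly_w_bigo[where R="\<lambda>w. RSA w q"])
      show "isCont (\<lambda>w. RSA w q) 0" unfolding RSA_def by (intro continuous_intros)
      fix n :: nat assume "n > 0"
      then have x: "real n * p \<noteq> 0" using p by simp
      show "(\<Sum>k<12. cc 1 k * cm p k n / (real n * p) ^ k) - EA (real n * p) q = (1 / (real n * p)) ^ 6 * RSA (1 / (real n * p)) q"
        unfolding sum12 cm0 cm1 cm2 cm3 cm4 cm5 cm6 cm7 cm8 cm9 cm10 cm11 q[symmetric] by (rule idSA[OF x])
    qed (use p in auto)
    then show ?thesis by simp
  qed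
  show "(\<lambda>n. cm p 12 n / (real n * p) ^ 12) \<in> O(\<lambda>n. real n powr - 6)"
  proof -
    have "(\<lambda>n. cm p 12 n / (real n * p) ^ 12) \<in> O(\<lambda>n. real n powr - real (6::nat))"
    proof (rule poly_w_bigo[where R="\<lambda>w. RNA w q"])
      show "isCont (\<lambda>w. RNA w q) 0" unfolding RNA_def by (intro continuous_intros)
      fix n :: nat assume "n > 0"
      then have x: "real n * p \<noteq> 0" using p by simp
      show "cm p 12 n / (real n * p) ^ 12 = (1 / (real n * p)) ^ 6 * RNA (1 / (real n * p)) q"
        unfolding cm12 q[symmetric] by (rule idNA[OF x])
    qed (use p in auto)
    then show ?thesis by simp
  qed
qed (use p in auto)

lemma masterB:
  assumes p: "0 < p" "p < 1" and q: "q = 1 - p"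
  shows "(\<lambda>n. inv_moment p 2 n - (real n * p) powr (- 2) * EB (real n * p) q)
           \<in> O(\<lambda>n. (real n * p) powr (- 2) * real n powr (- 5))"
proof (rule master[where N=10])
  show "0 < (2::real)" by simp
  show "(\<lambda>n. (\<Sum>k<10. cc 2 k * cm p k n / (real n * p) ^ k) - EB (real n * p) q) \<in> O(\<lambda>n. real n powr - 5)"
  proof -
    have "(\<lambda>n. (\<Sum>k<10. cc 2 k * cm p k n / (real n * p) ^ k) - EB (real n * p) q) \<in> O(\<lambda>n. real n powr - real (5::nat))"
    proof (rule poly_w_bigo[where R="\<lambda>w. RSB w q"])
      show "isCont (\<lambda>w. RSB w q) 0" unfolding RSB_def by (intro continuous_intros)
      fix n :: nat assume "n > 0"
      then have x: "real n * p \<noteq> 0" using p by simp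
      show "(\<Sum>k<10. cc 2 k * cm p k n / (real n * p) ^ k) - EB (real n * p) q = (1 / (real n * p)) ^ 5 * RSB (1 / (real n * p)) q"
        unfolding sum10 cm0 cm1 cm2 cm3 cm4 cm5 cm6 cm7 cm8 cm9 q[symmetric] by (rule idSB[OF x])
    qed (use p in auto)
    then show ?thesis by simp
  qed
  show "(\<lambda>n. cm p 10 n / (real n * p) ^ 10) \<in> O(\<lambda>n. real n powr - 5)"
  proof -
    have "(\<lambda>n. cm p 10 n / (real n * p) ^ 10) \<in> O(\<lambda>n. real n powr - real (5::nat))"
    proof (rule poly_w_bigo[where R="\<lambda>w. RNB w q"])
      show "isCont (\<lambda>w. RNB w q) 0" unfolding RNB_def by (intro continuous_intros)
      fix n :: nat assume "n > 0"
      then have x: "real n * p \<noteq> 0" using p by simp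
      show "cm p 10 n / (real n * p) ^ 10 = (1 / (real n * p)) ^ 5 * RNB (1 / (real n * p)) q"
        unfolding cm10 q[symmetric] by (rule idNB[OF x])
    qed (use p in auto)
    then show ?thesis by simp
  qed
qed (use p in auto)

lemma masterC:
  assumes p: "0 < p" "p < 1" and q: "q = 1 - p"
  shows "(\<lambda>n. inv_moment p 3 n - (real n * p) powr (- 3) * EC (real n * p) q)
           \<in> O(\<lambda>n. (real n * p) powr (- 3) * real n powr (- 5))"
proof (rule master[where N=10])
  show "0 < (3::real)" by simp
  show "(\<lambda>n. (\<Sum>k<10. cc 3 k * cm p k n / (real n * p) ^ k) - EC (real n * p) q) \<in> O(\<lambda>n. real n powr - 5)"
  proof -
    have "(\<lambda>n. (\<Sum>k<10. cc 3 k * cm p k n / (real n * p) ^ k) - EC (real n * p) q) \<in> O(\<lambda>n. real n powr - real (5::nat))"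
    proof (rule poly_w_bigo[where R="\<lambda>w. RSC w q"])
      show "isCont (\<lambda>w. RSC w q) 0" unfolding RSC_def by (intro continuous_intros)
      fix n :: nat assume "n > 0"
      then have x: "real n * p \<noteq> 0" using p by simp
      show "(\<Sum>k<10. cc 3 k * cm p k n / (real n * p) ^ k) - EC (real n * p) q = (1 / (real n * p)) ^ 5 * RSC (1 / (real n * p)) q"
        unfolding sum10 cm0 cm1 cm2 cm3 cm4 cm5 cm6 cm7 cm8 cm9 q[symmetric] by (rule idSC[OF x])
    qed (use p in auto)
    then show ?thesis by simp
  qed
  show "(\<lambda>n. cm p 10 n / (real n * p) ^ 10) \<in> O(\<lambda>n. real n powr - 5)"
  proof -
    have "(\<lambda>n. cm p 10 n / (real n * p) ^ 10) \<in> O(\<lambda>n. real n powr - real (5::nat))"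
    proof (rule poly_w_bigo[where R="\<lambda>w. RNC w q"])
      show "isCont (\<lambda>w. RNC w q) 0" unfolding RNC_def by (intro continuous_intros)
      fix n :: nat assume "n > 0"
      then have x: "real n * p \<noteq> 0" using p by simp
      show "cm p 10 n / (real n * p) ^ 10 = (1 / (real n * p)) ^ 5 * RNC (1 / (real n * p)) q"
        unfolding cm10 q[symmetric] by (rule idNC[OF x])
    qed (use p in auto)
    then show ?thesis by simp
  qed
qed (use p in auto)

theorem corollary3:
  fixes p q :: real
  assumes "0 < p" "p < 1" "q = 1 - p"
  shows
   "(\<forall>r::real. r > 0 \<longrightarrow>
      (\<lambda>n. inv_moment p r n
         - (1 / (real n * p) powr r) *
           (1 + r * (r + 1) * q / (2 * (real n * p))
              + r * (r + 1) * (r + 2) * q * (4 + q + 3 * r * q) / (24 * (real n * p) ^ 2)))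
      \<in> O[sequentially](\<lambda>n. (1 / (real n * p) powr r) * real n powr (-3)))
    \<and> (\<lambda>n. inv_moment p 1 n
         - (1 / (real n * p)) *
           (1 + q / (real n * p)
              + q * (1 + q) / (real n * p) ^ 2
              + q * (1 + 4 * q + q ^ 2) / (real n * p) ^ 3
              + q * (1 + q) * (1 + 10 * q + q ^ 2) / (real n * p) ^ 4
              + q * (1 + 26 * q + 66 * q ^ 2 + 26 * q ^ 3 + q ^ 4) / (real n * p) ^ 5))
      \<in> O[sequentially](\<lambda>n. (1 / (real n * p)) * real n powr (-6))
    \<and> (\<lambda>n. inv_moment p 2 n
         - (1 / (real n * p) ^ 2) *
           (1 + 3 * q / (real n * p)
              + q * (4 + 7 * q) / (real n * p) ^ 2
              + 5 * q * (1 + 6 * q + 3 * q ^ 2) / (real n * p) ^ 3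
              + q * (6 + 91 * q + 146 * q ^ 2 + 31 * q ^ 3) / (real n * p) ^ 4))
      \<in> O[sequentially](\<lambda>n. (1 / (real n * p) ^ 2) * real n powr (-5))
    \<and> (\<lambda>n. inv_moment p 3 n
         - (1 / (real n * p) ^ 3) *
           (1 + 6 * q / (real n * p)
              + 5 * q * (2 + 5 * q) / (real n * p) ^ 2
              + 15 * q * (1 + 8 * q + 6 * q ^ 2) / (real n * p) ^ 3
              + 7 * q * (3 + 58 * q + 128 * q ^ 2 + 43 * q ^ 3) / (real n * p) ^ 4))
      \<in> O[sequentially](\<lambda>n. (1 / (real n * p) ^ 3) * real n powr (-5))"
proof (intro conjI allI impI)
  fix r :: real assume r: "r > 0"
  have eq: "(real n * p) powr (- r) = 1 / (real n * p) powr r" for n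
    by (rule powr_minus_divide)
  show "(\<lambda>n. inv_moment p r n
         - (1 / (real n * p) powr r) *
           (1 + r * (r + 1) * q / (2 * (real n * p))
              + r * (r + 1) * (r + 2) * q * (4 + q + 3 * r * q) / (24 * (real n * p) ^ 2)))
      \<in> O[sequentially](\<lambda>n. (1 / (real n * p) powr r) * real n powr (-3))"
    using masterG[OF assms r] unfolding eq EG_def .
next
  have eq: "(real n * p) powr (- 1) = 1 / (real n * p)" for n
    using assms by (simp add: powr_minus_divide)
  show "(\<lambda>n. inv_moment p 1 n
         - (1 / (real n * p)) *
           (1 + q / (real n * p)
              + q * (1 + q) / (real n * p) ^ 2
              + q * (1 + 4 * q + q ^ 2) / (real n * p) ^ 3
              + q * (1 + q) * (1 + 10 * q + q ^ 2) / (real n * p) ^ 4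
              + q * (1 + 26 * q + 66 * q ^ 2 + 26 * q ^ 3 + q ^ 4) / (real n * p) ^ 5))
      \<in> O[sequentially](\<lambda>n. (1 / (real n * p)) * real n powr (-6))"
    using masterA[OF assms] unfolding eq EA_def .
next
  have eq: "(real n * p) powr (- 2) = 1 / (real n * p) ^ 2" for n
    using assms by (simp add: powr_minus_divide)
  show "(\<lambda>n. inv_moment p 2 n
         - (1 / (real n * p) ^ 2) *
           (1 + 3 * q / (real n * p)
              + q * (4 + 7 * q) / (real n * p) ^ 2
              + 5 * q * (1 + 6 * q + 3 * q ^ 2) / (real n * p) ^ 3
              + q * (6 + 91 * q + 146 * q ^ 2 + 31 * q ^ 3) / (real n * p) ^ 4))
      \<in> O[sequentially](\<lambda>n. (1 / (real n * p) ^ 2) * real n powr (-5))"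
    using masterB[OF assms] unfolding eq EB_def .
next
  have eq: "(real n * p) powr (- 3) = 1 / (real n * p) ^ 3" for n
    using assms by (simp add: powr_minus_divide)
  show "(\<lambda>n. inv_moment p 3 n
         - (1 / (real n * p) ^ 3) *
           (1 + 6 * q / (real n * p)
              + 5 * q * (2 + 5 * q) / (real n * p) ^ 2
              + 15 * q * (1 + 8 * q + 6 * q ^ 2) / (real n * p) ^ 3
              + 7 * q * (3 + 58 * q + 128 * q ^ 2 + 43 * q ^ 3) / (real n * p) ^ 4))
      \<in> O[sequentially](\<lambda>n. (1 / (real n * p) ^ 3) * real n powr (-5))"
    using masterC[OF assms] unfolding eq EC_def .
qed

end
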